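(* Let $\Gamma$ be a $\mathbb{Z}^d$-periodic graph with fundamental domain $W$. If an operator on $\Gamma$ has finitely many critical points, then its critical point degree is at least $2^d|W|$.
   Context: A $\mathbb{Z}^d$-periodic graph $\Gamma$ is a simple undirected graph with bounded vertex degrees together with a free action of $\mathbb{Z}^d$ by graph automorphisms, written $(\alpha,v)\mapsto \alpha+v$, having finitely many orbits on vertices and on edges. Write $u\sim v$ if $\{u,v\}$ is an edge. A fundamental domain $W$ is a set of vertices containing exactly one vertex of each $\mathbb{Z}^d$-orbit. An operator on $\Gamma$ is given by $\mathbb{Z}^d$-periodic real-valued functions $e$ on edges (edge weights, $e_{(u,v)}=e_{(v,u)}$) and $V$ on vertices (potential). For $z\in(\mathbb{C}^\times)^d$ and $\alpha\in\mathbb{Z}^d$ put $z^\alpha=z_1^{\alpha_1}\cdots z_d^{\alpha_d}$. The Floquet matrix $H(z)$ is the $W\times W$ matrix whose $(v,u)$ entry is $\delta_{v,u}V(v)-\sum_{\alpha\in\mathbb{Z}^d:\ v\sim \alpha+u} e_{(v,\alpha+u)}z^\alpha$. The dispersion polynomial is $\Phi(z,\lambda)=\det(\lambda I_W-H(z))$. A critical point of the operator is a solution $(z,\lambda)\in(\mathbb{C}^\times)^d\times\mathbb{C}$ of the system (the critical point equations) $\Phi=z_1\frac{\partial\Phi}{\partial z_1}=\cdots=z_d\frac{\partial \Phi}{\partial z_d}=0$. The critical point degree of the operator is the number of critical points counted with multiplicity (as points of the zero-dimensional solution scheme), and is defined to be $0$ if there are infinitely many critical points. *)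

theory Defs
  imports Complex_Main "HOL-Library.Poly_Mapping" "HOL-Combinatorics.Permutations"
begin

text \<open>Laurent polynomials with complex coefficients: finitely supported maps from
  integer exponent vectors (variables indexed by nat) to coefficients.
  Variables 0..d-1 are z_1..z_d, variable d is lambda.\<close>
type_synonym lpoly = "(nat \<Rightarrow>\<^sub>0 int) \<Rightarrow>\<^sub>0 complex"

definition lattice :: "nat \<Rightarrow> (nat \<Rightarrow>\<^sub>0 int) set" where
  "lattice d = {\<alpha>. Poly_Mapping.keys \<alpha> \<subseteq> {..<d}}"

definition orbit :: "nat \<Rightarrow> ((nat \<Rightarrow>\<^sub>0 int) \<Rightarrow> 'v \<Rightarrow> 'v) \<Rightarrow> 'v \<Rightarrow> 'v set" where
  "orbit d act v = {act \<alpha> v | \<alpha>. \<alpha> \<in> lattice d}"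

definition periodic_graph ::
  "nat \<Rightarrow> ((nat \<Rightarrow>\<^sub>0 int) \<Rightarrow> 'v \<Rightarrow> 'v) \<Rightarrow> ('v \<Rightarrow> 'v \<Rightarrow> bool) \<Rightarrow> bool" where
  "periodic_graph d act adj \<longleftrightarrow>
     (\<forall>u v. adj u v \<longrightarrow> adj v u) \<and> (\<forall>v. \<not> adj v v) \<and>
     (\<exists>B::nat. \<forall>v. finite {u. adj v u} \<and> card {u. adj v u} \<le> B) \<and>
     (\<forall>v. act 0 v = v) \<and>
     (\<forall>\<alpha>\<in>lattice d. \<forall>\<beta>\<in>lattice d. \<forall>v. act (\<alpha> + \<beta>) v = act \<alpha> (act \<beta> v)) \<and>
     (\<forall>\<alpha>\<in>lattice d. \<forall>v. act \<alpha> v = v \<longrightarrow> \<alpha> = 0) \<and>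
     (\<forall>\<alpha>\<in>lattice d. \<forall>u v. adj (act \<alpha> u) (act \<alpha> v) = adj u v) \<and>
     finite (orbit d act ` UNIV) \<and>
     finite ((\<lambda>E. {act \<alpha> ` E | \<alpha>. \<alpha> \<in> lattice d}) ` {{u, v} | u v. adj u v})"

definition fundamental_domain ::
  "nat \<Rightarrow> ((nat \<Rightarrow>\<^sub>0 int) \<Rightarrow> 'v \<Rightarrow> 'v) \<Rightarrow> 'v set \<Rightarrow> bool" where
  "fundamental_domain d act W \<longleftrightarrow> (\<forall>v. \<exists>!w. w \<in> W \<and> w \<in> orbit d act v)"

definition periodic_operator ::
  "nat \<Rightarrow> ((nat \<Rightarrow>\<^sub>0 int) \<Rightarrow> 'v \<Rightarrow> 'v) \<Rightarrow> ('v \<Rightarrow> 'v \<Rightarrow> real) \<Rightarrow> ('v \<Rightarrow> real) \<Rightarrow> bool" where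
  "periodic_operator d act e V \<longleftrightarrow>
     (\<forall>u v. e u v = e v u) \<and>
     (\<forall>\<alpha>\<in>lattice d. \<forall>u v. e (act \<alpha> u) (act \<alpha> v) = e u v) \<and>
     (\<forall>\<alpha>\<in>lattice d. \<forall>v. V (act \<alpha> v) = V v)"

definition lconst :: "complex \<Rightarrow> lpoly" where
  "lconst c = Poly_Mapping.single 0 c"

definition lvar :: "nat \<Rightarrow> lpoly" where
  "lvar i = Poly_Mapping.single (Poly_Mapping.single i 1) 1"

definition det_on :: "'v set \<Rightarrow> ('v \<Rightarrow> 'v \<Rightarrow> 'a::comm_ring_1) \<Rightarrow> 'a" where
  "det_on W M = (\<Sum>p\<in>{p. p permutes W}. of_int (sign p) * (\<Prod>v\<in>W. M v (p v)))"

text \<open>Floquet matrix entry (v,u); the monomial z^alpha is the exponent vector alpha.\<close>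
definition floquet ::
  "nat \<Rightarrow> ((nat \<Rightarrow>\<^sub>0 int) \<Rightarrow> 'v \<Rightarrow> 'v) \<Rightarrow> ('v \<Rightarrow> 'v \<Rightarrow> bool) \<Rightarrow> ('v \<Rightarrow> 'v \<Rightarrow> real)
     \<Rightarrow> ('v \<Rightarrow> real) \<Rightarrow> 'v \<Rightarrow> 'v \<Rightarrow> lpoly" where
  "floquet d act adj e V v u =
     (if v = u then lconst (complex_of_real (V v)) else 0)
     - (\<Sum>\<alpha>\<in>{\<alpha>\<in>lattice d. adj v (act \<alpha> u)}.
           Poly_Mapping.single \<alpha> (complex_of_real (e v (act \<alpha> u))))"

definition dispersion ::
  "nat \<Rightarrow> ((nat \<Rightarrow>\<^sub>0 int) \<Rightarrow> 'v \<Rightarrow> 'v) \<Rightarrow> ('v \<Rightarrow> 'v \<Rightarrow> bool) \<Rightarrow> ('v \<Rightarrow> 'v \<Rightarrow> real)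
     \<Rightarrow> ('v \<Rightarrow> real) \<Rightarrow> 'v set \<Rightarrow> lpoly" where
  "dispersion d act adj e V W =
     det_on W (\<lambda>v u. (if v = u then lvar d else 0) - floquet d act adj e V v u)"

text \<open>The operator z_i d/dz_i (variable index i) on Laurent polynomials.\<close>
definition zdz :: "nat \<Rightarrow> lpoly \<Rightarrow> lpoly" where
  "zdz i p = (\<Sum>\<alpha>\<in>Poly_Mapping.keys p. Poly_Mapping.single \<alpha> (of_int (Poly_Mapping.lookup \<alpha> i) * Poly_Mapping.lookup p \<alpha>))"

definition leval :: "(nat \<Rightarrow> complex) \<Rightarrow> lpoly \<Rightarrow> complex" where
  "leval x p = (\<Sum>\<alpha>\<in>Poly_Mapping.keys p. Poly_Mapping.lookup p \<alpha> * (\<Prod>i\<in>Poly_Mapping.keys \<alpha>. x i powi Poly_Mapping.lookup \<alpha> i))"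

text \<open>Critical point equations: generator 0 is Phi, generator (Suc i) is z_(i+1) dPhi/dz_(i+1).\<close>
definition crit_gens :: "nat \<Rightarrow> lpoly \<Rightarrow> nat \<Rightarrow> lpoly" where
  "crit_gens d \<Phi> j = (if j = 0 then \<Phi> else zdz (j - 1) \<Phi>)"

text \<open>Points of (C^x)^d x C, encoded as x :: nat => complex with x 0..x (d-1) the z's,
  x d = lambda, and all other coordinates 0.\<close>
definition crit_points :: "nat \<Rightarrow> lpoly \<Rightarrow> (nat \<Rightarrow> complex) set" where
  "crit_points d \<Phi> = {x. (\<forall>i<d. x i \<noteq> 0) \<and> (\<forall>i>d. x i = 0) \<and>
                          (\<forall>j\<le>d. leval x (crit_gens d \<Phi> j) = 0)}"

text \<open>The coordinate ring C[z_1^(+-1),...,z_d^(+-1),lambda] of (C^x)^d x C.\<close>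
definition ring_d :: "nat \<Rightarrow> lpoly set" where
  "ring_d d = {p. \<forall>\<alpha>\<in>Poly_Mapping.keys p. Poly_Mapping.keys \<alpha> \<subseteq> {..d} \<and> 0 \<le> Poly_Mapping.lookup \<alpha> d}"

text \<open>Number of critical points counted with multiplicity = length of the zero-dimensional
  solution scheme = complex dimension of ring_d / (critical ideal), i.e. the least size
  of a set spanning the quotient; 0 if there are infinitely many critical points.\<close>
definition crit_degree :: "nat \<Rightarrow> lpoly \<Rightarrow> nat" where
  "crit_degree d \<Phi> =
     (if finite (crit_points d \<Phi>) then
        (LEAST n. \<exists>b::nat \<Rightarrow> lpoly. (\<forall>k<n. b k \<in> ring_d d) \<and>
           (\<forall>f\<in>ring_d d. \<exists>(c::nat \<Rightarrow> complex) (g::nat \<Rightarrow> lpoly).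
              (\<forall>j\<le>d. g j \<in> ring_d d) \<and>
              f = (\<Sum>k<n. lconst (c k) * b k) + (\<Sum>j\<le>d. g j * crit_gens d \<Phi> j)))
      else 0)"

end

theory Submission
  imports Defs "HOL-Computational_Algebra.Polynomial" "HOL-Library.Countable_Set"
    "HOL-Library.Function_Algebras" "HOL-Analysis.Continuum_Not_Denumerable"
    "HOL-Computational_Algebra.Fundamental_Theorem_Algebra"
begin


lemma lookup_lconst_mult [simp]:
  "Poly_Mapping.lookup (lconst c * p) a = c * Poly_Mapping.lookup p a"
  unfolding lconst_def mult_map_scale_conv_mult[symmetric]
  by (simp add: Poly_Mapping.map.rep_eq when_def)

lemma lconst_add: "lconst (a + b) = lconst a + lconst b"
  by (simp add: lconst_def single_add)

lemma lconst_mult: "lconst (a * b) = lconst a * lconst b"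
  by (simp add: lconst_def mult_single)

lemma lconst_0 [simp]: "lconst 0 = 0"
  by (simp add: lconst_def)

lemma lconst_1 [simp]: "lconst 1 = 1"
  by (simp add: lconst_def)

lemma lconst_uminus: "lconst (- a) = - lconst a"
  by (simp add: lconst_def single_uminus)

lemma lconst_diff: "lconst (a - b) = lconst a - lconst b"
  by (simp add: lconst_def single_diff)

lemma lconst_eq_iff [simp]: "lconst a = lconst b \<longleftrightarrow> a = b"
  by (metis lconst_def lookup_single_eq)

lemma lconst_eq_0_iff [simp]: "lconst a = 0 \<longleftrightarrow> a = 0"
  using lconst_eq_iff[of a 0] by simp

lemma lconst_sum: "lconst (\<Sum>i\<in>A. f i) = (\<Sum>i\<in>A. lconst (f i))"
  by (induction A rule: infinite_finite_induct) (auto simp: lconst_add)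

lemma lconst_prod: "lconst (\<Prod>i\<in>A. f i) = (\<Prod>i\<in>A. lconst (f i))"
  by (induction A rule: infinite_finite_induct) (auto simp: lconst_mult)

lemma lconst_power: "lconst (a ^ n) = lconst a ^ n"
  by (induction n) (auto simp: lconst_mult)

lemma poly_expand:
  "p = (\<Sum>\<alpha>\<in>Poly_Mapping.keys p. Poly_Mapping.single \<alpha> (Poly_Mapping.lookup p \<alpha>))"
proof (rule poly_mapping_eqI)
  fix \<beta>
  have "Poly_Mapping.lookup (\<Sum>\<alpha>\<in>Poly_Mapping.keys p. Poly_Mapping.single \<alpha> (Poly_Mapping.lookup p \<alpha>)) \<beta>
     = (\<Sum>\<alpha>\<in>Poly_Mapping.keys p. (if \<beta> = \<alpha> then Poly_Mapping.lookup p \<alpha> else 0))"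
    by (simp add: lookup_sum lookup_single when_def eq_commute)
  also have "\<dots> = Poly_Mapping.lookup p \<beta>"
    by (simp add: in_keys_iff)
  finally show "Poly_Mapping.lookup p \<beta> = Poly_Mapping.lookup
     (\<Sum>\<alpha>\<in>Poly_Mapping.keys p. Poly_Mapping.single \<alpha> (Poly_Mapping.lookup p \<alpha>)) \<beta>" by simp
qed

lemma single_as_lconst: "Poly_Mapping.single \<alpha> c = lconst c * Poly_Mapping.single \<alpha> (1::complex)"
  by (simp add: lconst_def mult_single)

lemma update_eq_single_add:
  assumes "a \<notin> Poly_Mapping.keys f"
  shows "Poly_Mapping.update a b f = Poly_Mapping.single a b + f"
  using assms by (intro poly_mapping_eqI) (auto simp: lookup_update lookup_add lookup_single when_def in_keys_iff)

lemma keys_update_nz: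
  assumes "a \<notin> Poly_Mapping.keys f" "b \<noteq> 0"
  shows "Poly_Mapping.keys (Poly_Mapping.update a b f) = insert a (Poly_Mapping.keys f)"
  using assms by (auto simp: keys_update)

definition okexp :: "nat \<Rightarrow> (nat \<Rightarrow>\<^sub>0 int) \<Rightarrow> bool" where
  "okexp d \<alpha> \<longleftrightarrow> Poly_Mapping.keys \<alpha> \<subseteq> {..d} \<and> 0 \<le> Poly_Mapping.lookup \<alpha> d"

lemma ring_d_iff: "p \<in> ring_d d \<longleftrightarrow> (\<forall>\<alpha>\<in>Poly_Mapping.keys p. okexp d \<alpha>)"
  by (simp add: ring_d_def okexp_def)

lemma okexp_0 [simp]: "okexp d 0"
  by (simp add: okexp_def)

lemma okexp_add: "okexp d a \<Longrightarrow> okexp d b \<Longrightarrow> okexp d (a + b)"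
  unfolding okexp_def using keys_add[of a b] by (auto simp: lookup_add)

lemma ring_d_0 [simp]: "0 \<in> ring_d d"
  by (simp add: ring_d_iff)

lemma ring_d_single: "okexp d \<alpha> \<Longrightarrow> Poly_Mapping.single \<alpha> c \<in> ring_d d"
  by (simp add: ring_d_iff)

lemma ring_d_1 [simp]: "1 \<in> ring_d d"
  using ring_d_single[of d 0 1] by simp

lemma ring_d_lconst [simp]: "lconst c \<in> ring_d d"
  unfolding lconst_def by (rule ring_d_single) simp

lemma ring_d_add: "p \<in> ring_d d \<Longrightarrow> q \<in> ring_d d \<Longrightarrow> p + q \<in> ring_d d"
  unfolding ring_d_iff using keys_add[of p q] by blast

lemma ring_d_uminus: "p \<in> ring_d d \<Longrightarrow> - p \<in> ring_d d"
  unfolding ring_d_iff by simp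

lemma ring_d_diff: "p \<in> ring_d d \<Longrightarrow> q \<in> ring_d d \<Longrightarrow> p - q \<in> ring_d d"
  using ring_d_add[of p d "- q"] ring_d_uminus[of q d] by simp

lemma ring_d_mult: "p \<in> ring_d d \<Longrightarrow> q \<in> ring_d d \<Longrightarrow> p * q \<in> ring_d d"
  unfolding ring_d_iff using keys_mult[of p q] by (fastforce intro: okexp_add)

lemma ring_d_sum: "(\<And>i. i \<in> A \<Longrightarrow> f i \<in> ring_d d) \<Longrightarrow> (\<Sum>i\<in>A. f i) \<in> ring_d d"
  by (induction A rule: infinite_finite_induct) (auto intro: ring_d_add)

lemma ring_d_prod: "(\<And>i. i \<in> A \<Longrightarrow> f i \<in> ring_d d) \<Longrightarrow> (\<Prod>i\<in>A. f i) \<in> ring_d d"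
  by (induction A rule: infinite_finite_induct) (auto intro: ring_d_mult)

lemma ring_d_power: "p \<in> ring_d d \<Longrightarrow> p ^ n \<in> ring_d d"
  by (induction n) (auto intro: ring_d_mult)

lemma ring_d_lvar: "k \<le> d \<Longrightarrow> lvar k \<in> ring_d d"
  unfolding lvar_def by (rule ring_d_single) (auto simp: okexp_def lookup_single when_def)

definition xinv :: "nat \<Rightarrow> lpoly" where
  "xinv k = Poly_Mapping.single (Poly_Mapping.single k (-1)) 1"

lemma ring_d_xinv: "k < d \<Longrightarrow> xinv k \<in> ring_d d"
  unfolding xinv_def by (rule ring_d_single) (auto simp: okexp_def lookup_single when_def)

lemma lvar_xinv: "lvar k * xinv k = 1"
proof -
  have "Poly_Mapping.single k (1::int) + Poly_Mapping.single k (-1) = 0"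
    by (simp add: single_add[symmetric])
  then show ?thesis by (simp add: lvar_def xinv_def mult_single)
qed

definition is_ideal :: "nat \<Rightarrow> lpoly set \<Rightarrow> bool" where
  "is_ideal d K \<longleftrightarrow> K \<subseteq> ring_d d \<and> 0 \<in> K \<and> (\<forall>x\<in>K. \<forall>y\<in>K. x + y \<in> K) \<and>
     (\<forall>r\<in>ring_d d. \<forall>x\<in>K. r * x \<in> K)"

context
  fixes d K assumes K: "is_ideal d K"
begin

lemma ideal_sub: "x \<in> K \<Longrightarrow> x \<in> ring_d d"
  using K unfolding is_ideal_def by blast

lemma ideal_0: "0 \<in> K"
  using K unfolding is_ideal_def by blast

lemma ideal_add: "x \<in> K \<Longrightarrow> y \<in> K \<Longrightarrow> x + y \<in> K"
  using K unfolding is_ideal_def by blast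

lemma ideal_multL: "r \<in> ring_d d \<Longrightarrow> x \<in> K \<Longrightarrow> r * x \<in> K"
  using K unfolding is_ideal_def by blast

lemma ideal_multR: "r \<in> ring_d d \<Longrightarrow> x \<in> K \<Longrightarrow> x * r \<in> K"
  using ideal_multL by (simp add: mult.commute)

lemma ideal_lconst: "x \<in> K \<Longrightarrow> lconst c * x \<in> K"
  by (simp add: ideal_multL)

lemma ideal_uminus: "x \<in> K \<Longrightarrow> - x \<in> K"
  using ideal_lconst[of x "-1"] by (simp add: lconst_uminus)

lemma ideal_diff: "x \<in> K \<Longrightarrow> y \<in> K \<Longrightarrow> x - y \<in> K"
  using ideal_add[of x "- y"] ideal_uminus[of y] by simp

lemma ideal_sum: "(\<And>i. i \<in> A \<Longrightarrow> f i \<in> K) \<Longrightarrow> (\<Sum>i\<in>A. f i) \<in> K"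
  by (induction A rule: infinite_finite_induct) (auto intro: ideal_add ideal_0)

lemma ideal_one: "1 \<in> K \<Longrightarrow> r \<in> ring_d d \<Longrightarrow> r \<in> K"
  using ideal_multL[of r 1] by simp

lemma cong_mult:
  assumes "a - a' \<in> K" "b - b' \<in> K" "a \<in> ring_d d" "b' \<in> ring_d d"
  shows "a * b - a' * b' \<in> K"
proof -
  have "a * b - a' * b' = a * (b - b') + (a - a') * b'" by (simp add: algebra_simps)
  then show ?thesis using assms by (auto intro: ideal_add ideal_multL ideal_multR)
qed

lemma cong_trans: "a - b \<in> K \<Longrightarrow> b - c \<in> K \<Longrightarrow> a - c \<in> K"
  using ideal_add[of "a - b" "b - c"] by simp

end

definition cideal :: "nat \<Rightarrow> lpoly \<Rightarrow> lpoly set" where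
  "cideal d \<Phi> = {(\<Sum>j\<le>d. g j * crit_gens d \<Phi> j) | g. \<forall>j\<le>d. g j \<in> ring_d d}"

lemma is_ideal_cideal:
  assumes "\<forall>j\<le>d. crit_gens d \<Phi> j \<in> ring_d d"
  shows "is_ideal d (cideal d \<Phi>)"
  unfolding is_ideal_def
proof (intro conjI ballI subsetI)
  fix x assume "x \<in> cideal d \<Phi>"
  then show "x \<in> ring_d d" using assms unfolding cideal_def
    by (auto intro!: ring_d_sum ring_d_mult)
next
  show "0 \<in> cideal d \<Phi>" unfolding cideal_def
    by (rule CollectI, rule exI[of _ "\<lambda>_. 0"]) simp
next
  fix x y assume "x \<in> cideal d \<Phi>" "y \<in> cideal d \<Phi>"
  then obtain g h where "\<forall>j\<le>d. g j \<in> ring_d d" "\<forall>j\<le>d. h j \<in> ring_d d"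
    "x = (\<Sum>j\<le>d. g j * crit_gens d \<Phi> j)" "y = (\<Sum>j\<le>d. h j * crit_gens d \<Phi> j)"
    unfolding cideal_def by blast
  then show "x + y \<in> cideal d \<Phi>" unfolding cideal_def
    by (intro CollectI exI[of _ "\<lambda>j. g j + h j"]) (auto simp: sum.distrib algebra_simps intro: ring_d_add)
next
  fix r x assume "r \<in> ring_d d" "x \<in> cideal d \<Phi>"
  then obtain g where "\<forall>j\<le>d. g j \<in> ring_d d" "x = (\<Sum>j\<le>d. g j * crit_gens d \<Phi> j)"
    unfolding cideal_def by blast
  then show "r * x \<in> cideal d \<Phi>" using \<open>r \<in> ring_d d\<close> unfolding cideal_def
    by (intro CollectI exI[of _ "\<lambda>j. r * g j"]) (auto simp: sum_distrib_left algebra_simps intro: ring_d_mult)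
qed


definition emb :: "nat \<Rightarrow> complex poly \<Rightarrow> lpoly" where
  "emb k p = poly (map_poly lconst p) (lvar k)"

lemma map_poly_lconst_add: "map_poly lconst (p + q) = map_poly lconst p + map_poly lconst q"
  by (intro poly_eqI) (simp add: coeff_map_poly lconst_add)

lemma map_poly_lconst_smult: "map_poly lconst (smult a q) = smult (lconst a) (map_poly lconst q)"
  by (intro poly_eqI) (simp add: coeff_map_poly lconst_mult)

lemma emb_0 [simp]: "emb k 0 = 0"
  by (simp add: emb_def)

lemma emb_pCons: "emb k (pCons a p) = lconst a + lvar k * emb k p"
  by (simp add: emb_def map_poly_pCons)

lemma emb_add: "emb k (p + q) = emb k p + emb k q"
  by (simp add: emb_def map_poly_lconst_add)

lemma emb_smult: "emb k (smult a q) = lconst a * emb k q"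
  by (simp add: emb_def map_poly_lconst_smult)

lemma emb_mult: "emb k (p * q) = emb k p * emb k q"
  by (induction p) (simp_all add: emb_pCons emb_add emb_smult algebra_simps)

lemma emb_const [simp]: "emb k [:c:] = lconst c"
  by (simp add: emb_pCons)

lemma emb_1 [simp]: "emb k 1 = 1"
  using emb_const[of k 1] by (simp add: one_pCons)

lemma emb_X: "emb k [:a, 1:] = lconst a + lvar k"
  by (simp add: emb_pCons)

lemma emb_uminus: "emb k (- p) = - emb k p"
  using emb_smult[of k "-1" p] by (simp add: lconst_uminus)

lemma emb_diff: "emb k (p - q) = emb k p - emb k q"
  using emb_add[of k p "- q"] by (simp add: emb_uminus)

lemma emb_linfac: "emb k [:- a, 1:] = lvar k - lconst a"
  by (simp add: emb_X lconst_uminus)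

lemma emb_sum: "emb k (\<Sum>i\<in>A. f i) = (\<Sum>i\<in>A. emb k (f i))"
  by (induction A rule: infinite_finite_induct) (auto simp: emb_add)

lemma emb_prod: "emb k (\<Prod>i\<in>A. f i) = (\<Prod>i\<in>A. emb k (f i))"
  by (induction A rule: infinite_finite_induct) (auto simp: emb_mult)

lemma emb_power: "emb k (p ^ n) = emb k p ^ n"
  by (induction n) (auto simp: emb_mult)

lemma ring_d_emb: "k \<le> d \<Longrightarrow> emb k p \<in> ring_d d"
  by (induction p) (auto simp: emb_pCons intro!: ring_d_add ring_d_mult ring_d_lvar)



interpretation lp: vector_space "\<lambda>c (p::lpoly). lconst c * p"
proof
  fix a b :: complex and x y :: lpoly
  show "lconst a * (x + y) = lconst a * x + lconst a * y" by (simp add: distrib_left)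
  show "lconst (a + b) * x = lconst a * x + lconst b * x" by (simp add: lconst_add distrib_right)
  show "lconst a * (lconst b * x) = lconst (a * b) * x" by (simp add: lconst_mult mult.assoc)
  show "lconst 1 * x = x" by simp
qed


lemma lp_span_keys:
  assumes "Poly_Mapping.keys x \<subseteq> B"
  shows "x \<in> lp.span ((\<lambda>\<alpha>. Poly_Mapping.single \<alpha> 1) ` B)"
proof -
  have "x = (\<Sum>\<alpha>\<in>Poly_Mapping.keys x. lconst (Poly_Mapping.lookup x \<alpha>) * Poly_Mapping.single \<alpha> 1)"
    by (subst poly_expand[of x], rule sum.cong, rule refl, rule single_as_lconst)
  also have "\<dots> \<in> lp.span ((\<lambda>\<alpha>. Poly_Mapping.single \<alpha> 1) ` B)"
    using assms by (intro lp.span_sum lp.span_scale lp.span_base) auto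
  finally show ?thesis .
qed

definition box :: "nat \<Rightarrow> nat \<Rightarrow> (nat \<Rightarrow>\<^sub>0 int) set" where
  "box d N = {\<alpha>. Poly_Mapping.keys \<alpha> \<subseteq> {..d} \<and> (\<forall>i. \<bar>Poly_Mapping.lookup \<alpha> i\<bar> \<le> int N)}"

lemma finite_keys_bounded:
  assumes "finite D" "\<And>i. finite (T i)"
  shows "finite {\<alpha>::(nat \<Rightarrow>\<^sub>0 int). Poly_Mapping.keys \<alpha> \<subseteq> D \<and> (\<forall>i. Poly_Mapping.lookup \<alpha> i \<in> T i)}"
    (is "finite ?S")
proof -
  let ?f = "\<lambda>\<alpha>. restrict (Poly_Mapping.lookup \<alpha>) D"
  have "inj_on ?f ?S"
  proof (rule inj_onI)
    fix a b assume ab: "a \<in> ?S" "b \<in> ?S" "?f a = ?f b"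
    show "a = b"
    proof (rule poly_mapping_eqI)
      fix i show "Poly_Mapping.lookup a i = Poly_Mapping.lookup b i"
      proof (cases "i \<in> D")
        case True then show ?thesis using ab(3) by (metis restrict_apply')
      next
        case False then have "i \<notin> Poly_Mapping.keys a" "i \<notin> Poly_Mapping.keys b" using ab by auto
        then show ?thesis by (simp add: in_keys_iff)
      qed
    qed
  qed
  moreover have "?f ` ?S \<subseteq> PiE D T" by auto
  moreover have "finite (PiE D T)" using assms by (intro finite_PiE) auto
  ultimately show ?thesis by (meson finite_imageD finite_subset)
qed

lemma finite_box: "finite (box d N)"
proof -
  have "box d N = {\<alpha>. Poly_Mapping.keys \<alpha> \<subseteq> {..d} \<and> (\<forall>i. Poly_Mapping.lookup \<alpha> i \<in> {-int N..int N})}"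
    unfolding box_def by (auto simp: abs_le_iff) (metis minus_le_iff)+
  then show ?thesis using finite_keys_bounded[of "{..d}" "\<lambda>_. {-int N..int N}"] by simp
qed

lemma in_some_box:
  assumes "p \<in> ring_d d"
  shows "\<exists>N. Poly_Mapping.keys p \<subseteq> box d N"
proof -
  let ?N = "Max (insert 0 ((\<lambda>(\<alpha>, i). nat \<bar>Poly_Mapping.lookup \<alpha> i\<bar>) ` (Poly_Mapping.keys p \<times> {..d})))"
  have fin: "finite ((\<lambda>(\<alpha>, i). nat \<bar>Poly_Mapping.lookup \<alpha> i\<bar>) ` (Poly_Mapping.keys p \<times> {..d}))" by auto
  have "Poly_Mapping.keys p \<subseteq> box d ?N"
  proof
    fix \<alpha> assume a: "\<alpha> \<in> Poly_Mapping.keys p"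
    then have ka: "Poly_Mapping.keys \<alpha> \<subseteq> {..d}" using assms by (auto simp: ring_d_iff okexp_def)
    have "\<bar>Poly_Mapping.lookup \<alpha> i\<bar> \<le> int ?N" for i
    proof (cases "i \<le> d")
      case True
      then have "nat \<bar>Poly_Mapping.lookup \<alpha> i\<bar> \<le> ?N"
        using a fin by (intro Max_ge) force+
      then show ?thesis by linarith
    next
      case False
      then have "i \<notin> Poly_Mapping.keys \<alpha>" using ka by auto
      then show ?thesis by (simp add: in_keys_iff)
    qed
    then show "\<alpha> \<in> box d ?N" using ka by (simp add: box_def)
  qed
  then show ?thesis by blast
qed



section \<open>Countability lemma\<close>

lemma indep_aux:
  assumes K: "is_ideal d K" and kd: "k \<le> d"
    and noalg: "\<And>p. p \<noteq> 0 \<Longrightarrow> emb k p \<notin> K"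
    and F: "finite F" and u: "\<And>a. a \<in> F \<Longrightarrow> u a \<in> ring_d d"
      "\<And>a. a \<in> F \<Longrightarrow> u a * (lvar k - lconst a) - 1 \<in> K"
    and S: "(\<Sum>a\<in>F. lconst (c a) * u a) \<in> K" and aF: "a \<in> F"
  shows "c a = 0"
proof -
  define P where "P a = (\<Prod>b\<in>F - {a}. [:- b, 1:])" for a
  define Q where "Q = (\<Sum>a\<in>F. smult (c a) (P a))"
  define E where "E = emb k (\<Prod>b\<in>F. [:- b, 1:])"
  have PF: "E = (lvar k - lconst a) * emb k (P a)" if "a \<in> F" for a
  proof -
    have "(\<Prod>b\<in>F. [:- b, 1:]) = [:- a, 1:] * P a"
      unfolding P_def using that F by (simp add: prod.remove)
    then show ?thesis unfolding E_def by (simp only: emb_mult emb_linfac)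
  qed
  have xF: "E \<in> ring_d d" unfolding E_def using kd by (rule ring_d_emb)
  have eQ: "emb k Q = (\<Sum>a\<in>F. lconst (c a) * emb k (P a))"
    unfolding Q_def emb_sum emb_smult by simp
  have tm: "lconst (c a) * u a * E - lconst (c a) * emb k (P a)
      = lconst (c a) * ((u a * (lvar k - lconst a) - 1) * emb k (P a))" if "a \<in> F" for a
  proof -
    have "lconst (c a) * u a * E = lconst (c a) * (u a * (lvar k - lconst a) * emb k (P a))"
      using PF[OF that] by (simp add: mult.assoc)
    then show ?thesis by (simp add: right_diff_distrib left_diff_distrib)
  qed
  have "(\<Sum>a\<in>F. lconst (c a) * u a) * E - emb k Q
        = (\<Sum>a\<in>F. lconst (c a) * u a * E - lconst (c a) * emb k (P a))"
    unfolding eQ sum_distrib_right sum_subtractf by simp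
  also have "\<dots> = (\<Sum>a\<in>F. lconst (c a) * ((u a * (lvar k - lconst a) - 1) * emb k (P a)))"
    by (rule sum.cong[OF refl]) (rule tm)
  also have "\<dots> \<in> K"
  proof (rule ideal_sum[OF K])
    fix a assume "a \<in> F"
    then show "lconst (c a) * ((u a * (lvar k - lconst a) - 1) * emb k (P a)) \<in> K"
      using kd by (intro ideal_lconst[OF K] ideal_multR[OF K] ring_d_emb u(2))
  qed
  finally have 1: "(\<Sum>a\<in>F. lconst (c a) * u a) * E - emb k Q \<in> K" .
  have 2: "(\<Sum>a\<in>F. lconst (c a) * u a) * E \<in> K" by (rule ideal_multR[OF K xF S])
  have "emb k Q \<in> K" using ideal_diff[OF K 2 1] by simp
  then have "Q = 0" using noalg by blast
  then have "poly Q a = 0" by simp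
  moreover have "poly Q a = c a * poly (P a) a"
  proof -
    have "poly Q a = (\<Sum>b\<in>F. c b * poly (P b) a)" unfolding Q_def by (simp add: poly_sum)
    also have "\<dots> = c a * poly (P a) a + (\<Sum>b\<in>F - {a}. c b * poly (P b) a)"
      using F aF by (simp add: sum.remove)
    also have "(\<Sum>b\<in>F - {a}. c b * poly (P b) a) = 0"
    proof (rule sum.neutral, rule ballI)
      fix b assume b: "b \<in> F - {a}"
      have "poly (P b) a = (\<Prod>b'\<in>F - {b}. a - b')" unfolding P_def by (simp add: poly_prod)
      also have "\<dots> = 0" using F b aF by (intro prod_zero) (auto intro!: bexI[of _ a])
      finally show "c b * poly (P b) a = 0" by simp
    qed
    finally show ?thesis by simp
  qed
  moreover have "poly (P a) a \<noteq> 0" using F unfolding P_def by (auto simp: poly_prod)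
  ultimately show "c a = 0" by simp
qed


lemma countable_invertible:
  assumes K: "is_ideal d K" and kd: "k \<le> d"
    and noalg: "\<And>p. p \<noteq> 0 \<Longrightarrow> emb k p \<notin> K"
  shows "countable {a. \<exists>u\<in>ring_d d. u * (lvar k - lconst a) - 1 \<in> K}"
    (is "countable ?U")
proof -
  have "\<forall>a\<in>?U. \<exists>u. u \<in> ring_d d \<and> u * (lvar k - lconst a) - 1 \<in> K" by blast
  from bchoice[OF this] obtain u where
    u0: "\<forall>a\<in>?U. u a \<in> ring_d d \<and> u a * (lvar k - lconst a) - 1 \<in> K" by blast
  then have u: "\<And>a. a \<in> ?U \<Longrightarrow> u a \<in> ring_d d"
    "\<And>a. a \<in> ?U \<Longrightarrow> u a * (lvar k - lconst a) - 1 \<in> K" by auto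
  have indep: "c a = 0"
    if F: "finite F" "F \<subseteq> ?U" and S: "(\<Sum>a\<in>F. lconst (c a) * u a) \<in> K" and aF: "a \<in> F" for F c a
    using indep_aux[OF K kd noalg F(1) _ _ S aF] u F(2) by blast
  have uinj: "inj_on u ?U"
  proof (rule inj_onI, rule ccontr)
    fix a b assume ab: "a \<in> ?U" "b \<in> ?U" "u a = u b" "a \<noteq> b"
    let ?c = "\<lambda>x. if x = a then 1 else -1 :: complex"
    have "(\<Sum>x\<in>{a, b}. lconst (?c x) * u x) = lconst (?c a) * u a + lconst (?c b) * u b"
      using ab(4) by simp
    also have "\<dots> = 0" using ab(3,4) by (simp add: lconst_uminus)
    finally have "(\<Sum>x\<in>{a, b}. lconst (?c x) * u x) = 0" .
    then have "?c a = 0" using ab ideal_0[OF K] by (intro indep[of "{a,b}"]) auto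
    then show False by simp
  qed
  define Ub where "Ub N = {a \<in> ?U. Poly_Mapping.keys (u a) \<subseteq> box d N}" for N
  have "?U = (\<Union>N. Ub N)"
  proof
    show "?U \<subseteq> (\<Union>N. Ub N)"
    proof
      fix a assume "a \<in> ?U"
      then obtain N where "Poly_Mapping.keys (u a) \<subseteq> box d N" using u(1) in_some_box by blast
      then show "a \<in> (\<Union>N. Ub N)" using \<open>a \<in> ?U\<close> unfolding Ub_def by blast
    qed
  qed (auto simp: Ub_def)
  moreover have "finite (Ub N)" for N
  proof -
    let ?M = "(\<lambda>\<alpha>. Poly_Mapping.single \<alpha> (1::complex)) ` box d N"
    have "card G \<le> card ?M" if G: "G \<subseteq> Ub N" "finite G" for G
    proof -
      have GU: "G \<subseteq> ?U" using G unfolding Ub_def by auto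
      have "lp.independent (u ` G)"
      proof
        assume "lp.dependent (u ` G)"
        then obtain t w where t: "finite t" "t \<subseteq> u ` G"
          "(\<Sum>v\<in>t. lconst (w v) * v) = 0" "\<exists>v\<in>t. w v \<noteq> 0"
          unfolding lp.dependent_explicit by blast
        obtain F where F: "F \<subseteq> G" "t = u ` F" using t(2) by (meson subset_imageE)
        have injF: "inj_on u F" using uinj F GU by (meson inj_on_subset order_trans)
        have finF: "finite F" using G F finite_subset by blast
        have "(\<Sum>a\<in>F. lconst (w (u a)) * u a) = 0"
          using t(3) F(2) injF by (simp add: sum.reindex)
        then have "\<forall>a\<in>F. w (u a) = 0"
          using F GU ideal_0[OF K] finF by (intro ballI indep[of F "\<lambda>a. w (u a)"]) auto
        then show False using t(4) F(2) by auto
      qed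
      moreover have "u ` G \<subseteq> lp.span ?M"
        using G unfolding Ub_def by (auto intro!: lp_span_keys)
      ultimately have "card (u ` G) \<le> card ?M"
        using lp.independent_span_bound[of ?M "u ` G"] finite_box by auto
      moreover have "card (u ` G) = card G"
        using uinj GU by (meson card_image inj_on_subset)
      ultimately show ?thesis by simp
    qed
    then show ?thesis using finite_if_finite_subsets_card_bdd by blast
  qed
  ultimately show ?thesis by (simp add: countable_finite)
qed


section \<open>Maximal ideals\<close>

lemma ideal_union_chain:
  assumes "C \<noteq> {}" "\<And>X. X \<in> C \<Longrightarrow> is_ideal d X" "\<And>X Y. X \<in> C \<Longrightarrow> Y \<in> C \<Longrightarrow> X \<subseteq> Y \<or> Y \<subseteq> X"
  shows "is_ideal d (\<Union>C)"
  unfolding is_ideal_def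
proof (intro conjI ballI)
  show "\<Union>C \<subseteq> ring_d d" using assms(2) ideal_sub by blast
  show "0 \<in> \<Union>C" using assms(1,2) ideal_0 by blast
next
  fix x y assume "x \<in> \<Union>C" "y \<in> \<Union>C"
  then obtain X Y where XY: "X \<in> C" "Y \<in> C" "x \<in> X" "y \<in> Y" by blast
  show "x + y \<in> \<Union>C"
  proof (cases "X \<subseteq> Y")
    case True then show ?thesis using XY assms(2)[of Y] ideal_add by blast
  next
    case False then have "Y \<subseteq> X" using assms(3) XY by blast
    then show ?thesis using XY assms(2)[of X] ideal_add by blast
  qed
next
  fix r x assume "r \<in> ring_d d" "x \<in> \<Union>C"
  then show "r * x \<in> \<Union>C" using assms(2) ideal_multL by blast
qed

lemma exists_maximal_ideal:
  assumes J: "is_ideal d J" and nJ: "1 \<notin> J"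
  shows "\<exists>m. is_ideal d m \<and> J \<subseteq> m \<and> 1 \<notin> m \<and>
           (\<forall>m'. is_ideal d m' \<and> m \<subseteq> m' \<and> 1 \<notin> m' \<longrightarrow> m' = m)"
proof -
  let ?A = "{m. is_ideal d m \<and> J \<subseteq> m \<and> 1 \<notin> m}"
  have "\<exists>M\<in>?A. \<forall>X\<in>?A. M \<subseteq> X \<longrightarrow> X = M"
  proof (rule Zorn_Lemma2, rule ballI)
    fix C assume C: "C \<in> chains ?A"
    show "\<exists>U\<in>?A. \<forall>X\<in>C. X \<subseteq> U"
    proof (cases "C = {}")
      case True
      have "J \<in> ?A" using J nJ by simp
      then show ?thesis using True by blast
    next
      case False
      have sub: "C \<subseteq> ?A" using C unfolding chains_def by simp
      have ch: "X \<subseteq> Y \<or> Y \<subseteq> X" if "X \<in> C" "Y \<in> C" for X Y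
        using C that unfolding chains_def chain_subset_def by simp
      have "is_ideal d (\<Union>C)" using False sub ch by (intro ideal_union_chain) auto
      moreover have "J \<subseteq> \<Union>C" using False sub by blast
      moreover have "1 \<notin> \<Union>C" using sub by blast
      ultimately have "\<Union>C \<in> ?A" by simp
      then show ?thesis by (intro bexI[of _ "\<Union>C"]) auto
    qed
  qed
  then obtain M where M: "M \<in> ?A" "\<forall>X\<in>?A. M \<subseteq> X \<longrightarrow> X = M" by blast
  have "\<forall>m'. is_ideal d m' \<and> M \<subseteq> m' \<and> 1 \<notin> m' \<longrightarrow> m' = M"
  proof (intro allI impI)
    fix m' assume h: "is_ideal d m' \<and> M \<subseteq> m' \<and> 1 \<notin> m'"
    have "J \<subseteq> M" using M(1) by simp
    then have "m' \<in> ?A" using h by auto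
    then show "m' = M" using M(2) h by blast
  qed
  moreover have "is_ideal d M" "J \<subseteq> M" "1 \<notin> M" using M(1) by auto
  ultimately show ?thesis by blast
qed

definition ideal_ext :: "nat \<Rightarrow> lpoly set \<Rightarrow> lpoly \<Rightarrow> lpoly set" where
  "ideal_ext d m f = {x + h * f | x h. x \<in> m \<and> h \<in> ring_d d}"

lemma is_ideal_ext:
  assumes m: "is_ideal d m" and f: "f \<in> ring_d d"
  shows "is_ideal d (ideal_ext d m f)" "m \<subseteq> ideal_ext d m f" "f \<in> ideal_ext d m f"
proof -
  show "is_ideal d (ideal_ext d m f)"
    unfolding is_ideal_def
  proof (intro conjI ballI subsetI)
    fix x assume "x \<in> ideal_ext d m f"
    then show "x \<in> ring_d d" unfolding ideal_ext_def
      using f ideal_sub[OF m] by (auto intro!: ring_d_add ring_d_mult)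
  next
    show "0 \<in> ideal_ext d m f" unfolding ideal_ext_def
      using ideal_0[OF m] by (intro CollectI exI[of _ 0]) auto
  next
    fix x y assume "x \<in> ideal_ext d m f" "y \<in> ideal_ext d m f"
    then obtain x1 h1 x2 h2 where "x = x1 + h1 * f" "y = x2 + h2 * f" "x1 \<in> m" "x2 \<in> m"
      "h1 \<in> ring_d d" "h2 \<in> ring_d d" unfolding ideal_ext_def by blast
    then show "x + y \<in> ideal_ext d m f" unfolding ideal_ext_def
      by (intro CollectI exI[of _ "x1 + x2"] exI[of _ "h1 + h2"])
        (auto simp: algebra_simps intro: ideal_add[OF m] ring_d_add)
  next
    fix r x assume "r \<in> ring_d d" "x \<in> ideal_ext d m f"
    then obtain x1 h1 where "x = x1 + h1 * f" "x1 \<in> m" "h1 \<in> ring_d d" unfolding ideal_ext_def by blast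
    then show "r * x \<in> ideal_ext d m f" using \<open>r \<in> ring_d d\<close> unfolding ideal_ext_def
      by (intro CollectI exI[of _ "r * x1"] exI[of _ "r * h1"])
        (auto simp: algebra_simps intro: ideal_multL[OF m] ring_d_mult)
  qed
  show "m \<subseteq> ideal_ext d m f"
  proof
    fix x assume "x \<in> m" then show "x \<in> ideal_ext d m f" unfolding ideal_ext_def
      by (intro CollectI exI[of _ x] exI[of _ 0]) auto
  qed
  show "f \<in> ideal_ext d m f" unfolding ideal_ext_def
    using ideal_0[OF m] by (intro CollectI exI[of _ 0] exI[of _ 1]) auto
qed

lemma one_in_ext_imp:
  assumes m: "is_ideal d m" and "1 \<in> ideal_ext d m f"
  shows "\<exists>h\<in>ring_d d. h * f - 1 \<in> m"
proof -
  obtain x h where "1 = x + h * f" "x \<in> m" "h \<in> ring_d d"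
    using assms(2) unfolding ideal_ext_def by blast
  then have "h * f - 1 = - x" by (simp add: algebra_simps)
  then show ?thesis using \<open>x \<in> m\<close> \<open>h \<in> ring_d d\<close> ideal_uminus[OF m] by metis
qed

lemma maximal_invertible:
  assumes m: "is_ideal d m" and n1: "1 \<notin> m"
    and mx: "\<forall>m'. is_ideal d m' \<and> m \<subseteq> m' \<and> 1 \<notin> m' \<longrightarrow> m' = m"
    and f: "f \<in> ring_d d" "f \<notin> m"
  shows "\<exists>h\<in>ring_d d. h * f - 1 \<in> m"
proof -
  have "1 \<in> ideal_ext d m f"
  proof (rule ccontr)
    assume "1 \<notin> ideal_ext d m f"
    then have "ideal_ext d m f = m" using mx is_ideal_ext[OF m f(1)] by blast
    then show False using is_ideal_ext(3)[OF m f(1)] f(2) by simp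
  qed
  then show ?thesis by (rule one_in_ext_imp[OF m])
qed

lemma lconst_in_ideal_nonzero:
  assumes m: "is_ideal d m" and "lconst c \<in> m" "c \<noteq> 0"
  shows "1 \<in> m"
proof -
  have "lconst (inverse c) * lconst c \<in> m" using assms by (intro ideal_lconst[OF m])
  then show ?thesis using assms by (simp add: lconst_mult[symmetric])
qed

lemma maximal_has_value:
  assumes m: "is_ideal d m" and n1: "1 \<notin> m"
    and mx: "\<forall>m'. is_ideal d m' \<and> m \<subseteq> m' \<and> 1 \<notin> m' \<longrightarrow> m' = m"
    and kd: "k \<le> d"
  shows "\<exists>a. lvar k - lconst a \<in> m"
proof (rule ccontr)
  assume na: "\<nexists>a. lvar k - lconst a \<in> m"
  have xa: "lvar k - lconst a \<in> ring_d d" for a using kd by (intro ring_d_diff ring_d_lvar) auto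
  have inv: "\<exists>h\<in>ring_d d. h * (lvar k - lconst a) - 1 \<in> m" for a
    using maximal_invertible[OF m n1 mx xa] na by blast
  have noalg: "emb k p \<notin> m" if "p \<noteq> 0" for p
    using that
  proof (induction "degree p" arbitrary: p rule: less_induct)
    case less
    show ?case
    proof (cases "degree p = 0")
      case True
      then obtain c where "p = [:c:]" by (metis degree_eq_zeroE)
      then have c0: "c \<noteq> 0" and ep: "emb k p = lconst c" using less.prems by auto
      show ?thesis
      proof
        assume "emb k p \<in> m"
        then have "lconst c \<in> m" using ep by simp
        then have "1 \<in> m" using lconst_in_ideal_nonzero[OF m _ c0] by blast
        then show False using n1 by blast
      qed
    next
      case False
      have "degree p > 0" using False by simp
      then obtain r where "poly p r = 0" using alg_closed_imp_poly_has_root[of p] by blast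
      then have "[:- r, 1:] dvd p" by (simp add: poly_eq_0_iff_dvd)
      then obtain q where pq: "p = [:- r, 1:] * q" by (elim dvdE)
      then have q0: "q \<noteq> 0" using less.prems by auto
      have "degree ([:- r, 1:] * q) = degree [:- r, 1:] + degree q"
        using q0 by (intro degree_mult_eq) auto
      then have "degree p = degree q + 1" using pq by simp
      then have dq: "degree q < degree p" by simp
      have "emb k q \<notin> m" using less.hyps[OF dq q0] .
      moreover have "emb k q \<in> m" if ep: "emb k p \<in> m"
      proof -
        obtain h where h: "h \<in> ring_d d" "h * (lvar k - lconst r) - 1 \<in> m" using inv[of r] by blast
        have epq: "emb k p = (lvar k - lconst r) * emb k q"
          unfolding pq by (simp only: emb_mult emb_linfac)
        have "emb k q = h * emb k p - (h * (lvar k - lconst r) - 1) * emb k q"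
          unfolding epq by (simp add: algebra_simps)
        also have "\<dots> \<in> m"
          by (rule ideal_diff[OF m ideal_multL[OF m h(1) ep] ideal_multR[OF m ring_d_emb[OF kd] h(2)]])
        finally show ?thesis .
      qed
      ultimately show ?thesis by blast
    qed
  qed
  have "countable {a. \<exists>u\<in>ring_d d. u * (lvar k - lconst a) - 1 \<in> m}"
    by (rule countable_invertible[OF m kd noalg])
  moreover have "{a. \<exists>u\<in>ring_d d. u * (lvar k - lconst a) - 1 \<in> m} = UNIV" using inv by auto
  ultimately show False using uncountable_UNIV_complex by simp
qed


section \<open>Evaluation congruences and the weak Nullstellensatz\<close>

lemma single_pow: "Poly_Mapping.single (Poly_Mapping.single i (int n)) (1::complex) = lvar i ^ n"
proof (induction n)
  case 0 then show ?case by simp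
next
  case (Suc n)
  have "Poly_Mapping.single i (int (Suc n)) = Poly_Mapping.single i 1 + Poly_Mapping.single i (int n)"
    by (simp add: single_add[symmetric] add.commute)
  then have "Poly_Mapping.single (Poly_Mapping.single i (int (Suc n))) (1::complex)
     = Poly_Mapping.single (Poly_Mapping.single i 1) 1 * Poly_Mapping.single (Poly_Mapping.single i (int n)) 1"
    by (simp add: mult_single)
  then show ?case using Suc by (simp add: lvar_def)
qed

lemma single_pow_neg: "Poly_Mapping.single (Poly_Mapping.single i (- int n)) (1::complex) = xinv i ^ n"
proof (induction n)
  case 0 then show ?case by simp
next
  case (Suc n)
  have "Poly_Mapping.single i (- int (Suc n)) = Poly_Mapping.single i (-1) + Poly_Mapping.single i (- int n)"
    by (simp add: single_add[symmetric] add.commute)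
  then have "Poly_Mapping.single (Poly_Mapping.single i (- int (Suc n))) (1::complex)
     = Poly_Mapping.single (Poly_Mapping.single i (-1)) 1 * Poly_Mapping.single (Poly_Mapping.single i (- int n)) 1"
    by (simp add: mult_single)
  then show ?case using Suc by (simp add: xinv_def)
qed

lemma cong_power:
  assumes K: "is_ideal d K" and "a - b \<in> K" "a \<in> ring_d d" "b \<in> ring_d d"
  shows "a ^ n - b ^ n \<in> K"
proof (induction n)
  case 0 then show ?case using ideal_0[OF K] by simp
next
  case (Suc n)
  show ?case using cong_mult[OF K assms(2) Suc assms(3) ring_d_power[OF assms(4)]] by simp
qed

definition mon :: "(nat \<Rightarrow> complex) \<Rightarrow> (nat \<Rightarrow>\<^sub>0 int) \<Rightarrow> complex" where
  "mon x \<alpha> = (\<Prod>i\<in>Poly_Mapping.keys \<alpha>. x i powi Poly_Mapping.lookup \<alpha> i)"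

lemma leval_mon: "leval x p = (\<Sum>\<alpha>\<in>Poly_Mapping.keys p. Poly_Mapping.lookup p \<alpha> * mon x \<alpha>)"
  by (simp add: leval_def mon_def)

lemma mon_0 [simp]: "mon x 0 = 1"
  by (simp add: mon_def)

lemma mon_update:
  assumes "i \<notin> Poly_Mapping.keys \<beta>" "t \<noteq> 0"
  shows "mon x (Poly_Mapping.update i t \<beta>) = x i powi t * mon x \<beta>"
proof -
  have "mon x (Poly_Mapping.update i t \<beta>) =
     (\<Prod>j\<in>insert i (Poly_Mapping.keys \<beta>). x j powi Poly_Mapping.lookup (Poly_Mapping.update i t \<beta>) j)"
    unfolding mon_def using keys_update_nz[OF assms] by simp
  also have "\<dots> = x i powi t * (\<Prod>j\<in>Poly_Mapping.keys \<beta>. x j powi Poly_Mapping.lookup (Poly_Mapping.update i t \<beta>) j)"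
    using assms(1) by (simp add: lookup_update)
  also have "(\<Prod>j\<in>Poly_Mapping.keys \<beta>. x j powi Poly_Mapping.lookup (Poly_Mapping.update i t \<beta>) j) = mon x \<beta>"
    unfolding mon_def using assms(1) by (intro prod.cong refl) (auto simp: lookup_update)
  finally show ?thesis .
qed

lemma mono_cong:
  assumes m: "is_ideal d m"
    and vals: "\<And>i. i \<le> d \<Longrightarrow> lvar i - lconst (x i) \<in> m"
    and nz: "\<And>i. i < d \<Longrightarrow> x i \<noteq> 0"
    and ok: "okexp d \<alpha>"
  shows "Poly_Mapping.single \<alpha> 1 - lconst (mon x \<alpha>) \<in> m"
  using ok
proof (induction \<alpha> rule: update_induct)
  case const
  then show ?case using ideal_0[OF m] by simp
next
  case (update \<beta> i t)
  have keysu: "Poly_Mapping.keys (Poly_Mapping.update i t \<beta>) = insert i (Poly_Mapping.keys \<beta>)"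
    using keys_update_nz[OF update(1,2)] .
  have upd: "Poly_Mapping.update i t \<beta> = Poly_Mapping.single i t + \<beta>"
    using update_eq_single_add[OF update(1)] .
  have id: "i \<le> d" using update.prems keysu unfolding okexp_def by auto
  have lu: "Poly_Mapping.lookup (Poly_Mapping.update i t \<beta>) j = (if i = j then t else Poly_Mapping.lookup \<beta> j)" for j
    by (simp add: lookup_update)
  have okb: "okexp d \<beta>"
    using update.prems keysu unfolding okexp_def
    using update(1) by (auto simp: lu in_keys_iff split: if_splits)
  have lt: "Poly_Mapping.lookup (Poly_Mapping.update i t \<beta>) i = t" by (simp add: lookup_update)
  have td: "0 \<le> t" if "i = d"
  proof -
    have "0 \<le> Poly_Mapping.lookup (Poly_Mapping.update i t \<beta>) d"
      using update.prems unfolding okexp_def by blast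
    then show ?thesis using lt that by simp
  qed
  have IH: "Poly_Mapping.single \<beta> 1 - lconst (mon x \<beta>) \<in> m" using update.IH okb by blast
  have fac: "Poly_Mapping.single (Poly_Mapping.single i t) 1 - lconst (x i powi t) \<in> m"
  proof (cases "0 \<le> t")
    case True
    then obtain n where t: "t = int n" using nonneg_int_cases by blast
    have "lvar i ^ n - lconst (x i) ^ n \<in> m"
      using id by (intro cong_power[OF m vals] ring_d_lvar) auto
    then show ?thesis by (simp add: t single_pow lconst_power)
  next
    case False
    have "t = - int (nat (- t))" using False by simp
    then obtain n where t: "t = - int n" by blast
    have il: "i < d" using False td id by fastforce
    have xi: "x i \<noteq> 0" using nz[OF il] .
    have "xinv i - lconst (inverse (x i)) = - (xinv i * lconst (inverse (x i))) * (lvar i - lconst (x i))"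
    proof -
      have "- (xinv i * lconst (inverse (x i))) * (lvar i - lconst (x i))
          = - (lvar i * xinv i) * lconst (inverse (x i)) + xinv i * lconst (inverse (x i) * x i)"
        by (simp add: lconst_mult algebra_simps)
      also have "\<dots> = xinv i - lconst (inverse (x i))" using xi by (simp add: lvar_xinv)
      finally show ?thesis by simp
    qed
    also have "\<dots> \<in> m"
      using il id by (intro ideal_multL[OF m] vals ring_d_uminus ring_d_mult ring_d_xinv) auto
    finally have "xinv i ^ n - lconst (inverse (x i)) ^ n \<in> m"
      using il by (intro cong_power[OF m] ring_d_xinv) auto
    then show ?thesis by (simp add: t single_pow_neg lconst_power[symmetric] power_int_minus power_inverse)
  qed
  have "Poly_Mapping.single (Poly_Mapping.update i t \<beta>) (1::complex)
      = Poly_Mapping.single (Poly_Mapping.single i t) 1 * Poly_Mapping.single \<beta> 1"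
    by (simp add: upd mult_single)
  moreover have "mon x (Poly_Mapping.update i t \<beta>) = x i powi t * mon x \<beta>"
    by (rule mon_update[OF update(1,2)])
  moreover have "okexp d (Poly_Mapping.single i t)"
    using id td by (auto simp: okexp_def lookup_single when_def)
  ultimately show ?case
    using cong_mult[OF m fac IH] okb
    by (simp add: lconst_mult ring_d_single)
qed

lemma eval_cong:
  assumes m: "is_ideal d m"
    and vals: "\<And>i. i \<le> d \<Longrightarrow> lvar i - lconst (x i) \<in> m"
    and nz: "\<And>i. i < d \<Longrightarrow> x i \<noteq> 0"
    and f: "f \<in> ring_d d"
  shows "f - lconst (leval x f) \<in> m"
proof -
  have "f = (\<Sum>\<alpha>\<in>Poly_Mapping.keys f. lconst (Poly_Mapping.lookup f \<alpha>) * Poly_Mapping.single \<alpha> 1)"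
    by (subst poly_expand[of f], rule sum.cong, rule refl, rule single_as_lconst)
  moreover have "lconst (leval x f) = (\<Sum>\<alpha>\<in>Poly_Mapping.keys f. lconst (Poly_Mapping.lookup f \<alpha>) * lconst (mon x \<alpha>))"
    by (simp add: leval_mon lconst_sum lconst_mult)
  ultimately have "f - lconst (leval x f) =
     (\<Sum>\<alpha>\<in>Poly_Mapping.keys f. lconst (Poly_Mapping.lookup f \<alpha>) * (Poly_Mapping.single \<alpha> 1 - lconst (mon x \<alpha>)))"
    by (metis (no_types, lifting) right_diff_distrib sum.cong sum_subtractf)
  also have "\<dots> \<in> m"
    using f by (intro ideal_sum[OF m] ideal_lconst[OF m] mono_cong[OF m vals nz]) (auto simp: ring_d_iff)
  finally show ?thesis .
qed

lemma weak_nullstellensatz: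
  assumes J: "is_ideal d J" and nJ: "1 \<notin> J"
  shows "\<exists>x. (\<forall>i<d. x i \<noteq> 0) \<and> (\<forall>i>d. x i = 0) \<and> (\<forall>f\<in>J. leval x f = 0)"
proof -
  obtain m where m: "is_ideal d m" "J \<subseteq> m" "1 \<notin> m"
    and mx: "\<forall>m'. is_ideal d m' \<and> m \<subseteq> m' \<and> 1 \<notin> m' \<longrightarrow> m' = m"
    using exists_maximal_ideal[OF J nJ] by blast
  have "\<forall>i. \<exists>a. i \<le> d \<longrightarrow> lvar i - lconst a \<in> m"
    using maximal_has_value[OF m(1,3) mx] by blast
  then obtain a where a: "\<And>i. i \<le> d \<Longrightarrow> lvar i - lconst (a i) \<in> m" by metis
  define x where "x i = (if i \<le> d then a i else 0)" for i
  have vals: "lvar i - lconst (x i) \<in> m" if "i \<le> d" for i using a that by (simp add: x_def)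
  have nz: "x i \<noteq> 0" if il: "i < d" for i
  proof
    assume "x i = 0"
    then have "lvar i \<in> m" using vals[of i] il by simp
    then have "xinv i * lvar i \<in> m" using il by (intro ideal_multL[OF m(1)] ring_d_xinv)
    moreover have "xinv i * lvar i = 1" using lvar_xinv[of i] by (simp add: mult.commute)
    ultimately show False using m(3) by simp
  qed
  have "leval x f = 0" if "f \<in> J" for f
  proof (rule ccontr)
    assume ne: "leval x f \<noteq> 0"
    have fm: "f \<in> m" using that m(2) by blast
    have "f - lconst (leval x f) \<in> m"
      using fm by (intro eval_cong[OF m(1) vals nz] ideal_sub[OF m(1)]) auto
    then have "f - (f - lconst (leval x f)) \<in> m" by (rule ideal_diff[OF m(1) fm])
    then have "lconst (leval x f) \<in> m" by simp
    then show False using lconst_in_ideal_nonzero[OF m(1) _ ne] m(3) by blast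
  qed
  moreover have "\<forall>i>d. x i = 0" by (simp add: x_def)
  ultimately show ?thesis using nz by blast
qed


lemma leval_superset:
  assumes "finite S" "Poly_Mapping.keys p \<subseteq> S"
  shows "leval x p = (\<Sum>\<alpha>\<in>S. Poly_Mapping.lookup p \<alpha> * mon x \<alpha>)"
  unfolding leval_mon using assms by (intro sum.mono_neutral_left) (auto simp: in_keys_iff)

lemma leval_add: "leval x (p + q) = leval x p + leval x q"
proof -
  let ?S = "Poly_Mapping.keys p \<union> Poly_Mapping.keys q"
  have "leval x (p + q) = (\<Sum>\<alpha>\<in>?S. Poly_Mapping.lookup (p + q) \<alpha> * mon x \<alpha>)"
    using keys_add[of p q] by (intro leval_superset) auto
  also have "\<dots> = (\<Sum>\<alpha>\<in>?S. Poly_Mapping.lookup p \<alpha> * mon x \<alpha>) + (\<Sum>\<alpha>\<in>?S. Poly_Mapping.lookup q \<alpha> * mon x \<alpha>)"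
    by (simp add: lookup_add distrib_right sum.distrib)
  also have "\<dots> = leval x p + leval x q"
    by (subst (1 2) leval_superset[of ?S]) auto
  finally show ?thesis .
qed

lemma leval_uminus: "leval x (- p) = - leval x p"
  unfolding leval_mon by (simp add: sum_negf)

lemma leval_diff: "leval x (p - q) = leval x p - leval x q"
  using leval_add[of x p "- q"] leval_uminus[of x q] by simp

lemma leval_lconst: "leval x (lconst a) = a"
  by (cases "a = 0") (simp_all add: leval_mon lconst_def)

lemma leval_lvar: "leval x (lvar k) = x k"
  by (simp add: leval_mon lvar_def mon_def)

lemma crit_gen_in_cideal:
  assumes "j \<le> d"
  shows "crit_gens d \<Phi> j \<in> cideal d \<Phi>"
proof -
  have "crit_gens d \<Phi> j = (\<Sum>j'\<le>d. (if j' = j then 1 else 0) * crit_gens d \<Phi> j')"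
  proof -
    have "(\<Sum>j'\<le>d. (if j' = j then 1 else 0) * crit_gens d \<Phi> j') = (\<Sum>j'\<le>d. (if j' = j then crit_gens d \<Phi> j' else 0))"
      by (intro sum.cong) auto
    also have "\<dots> = crit_gens d \<Phi> j" using assms by simp
    finally show ?thesis by simp
  qed
  then show ?thesis unfolding cideal_def by (intro CollectI exI[of _ "\<lambda>j'. if j' = j then 1 else 0"]) auto
qed

lemma exists_alg:
  assumes G: "\<forall>j\<le>d. crit_gens d \<Phi> j \<in> ring_d d"
    and fin: "finite (crit_points d \<Phi>)"
    and kd: "k \<le> d"
  shows "\<exists>p. p \<noteq> 0 \<and> emb k p \<in> cideal d \<Phi>"
proof (rule ccontr)
  let ?I = "cideal d \<Phi>"
  have I: "is_ideal d ?I" using is_ideal_cideal[OF G] .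
  assume "\<not> ?thesis"
  then have noalg: "\<And>p. p \<noteq> 0 \<Longrightarrow> emb k p \<notin> ?I" by blast
  let ?U = "{a. \<exists>u\<in>ring_d d. u * (lvar k - lconst a) - 1 \<in> ?I}"
  have cU: "countable ?U" by (rule countable_invertible[OF I kd noalg])
  have xa: "lvar k - lconst a \<in> ring_d d" for a using kd by (intro ring_d_diff ring_d_lvar) auto
  have pt: "\<exists>x\<in>crit_points d \<Phi>. x k = a" if aU: "a \<notin> ?U" for a
  proof -
    let ?J = "ideal_ext d ?I (lvar k - lconst a)"
    have J: "is_ideal d ?J" using is_ideal_ext(1)[OF I xa] .
    have "1 \<notin> ?J"
    proof
      assume "1 \<in> ?J"
      then have "\<exists>h\<in>ring_d d. h * (lvar k - lconst a) - 1 \<in> ?I" by (rule one_in_ext_imp[OF I])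
      then show False using aU by blast
    qed
    then obtain x where x: "\<forall>i<d. x i \<noteq> 0" "\<forall>i>d. x i = 0" "\<forall>f\<in>?J. leval x f = 0"
      using weak_nullstellensatz[OF J] by blast
    have "\<forall>j\<le>d. leval x (crit_gens d \<Phi> j) = 0"
      using x(3) is_ideal_ext(2)[OF I xa] crit_gen_in_cideal by blast
    then have "x \<in> crit_points d \<Phi>" using x(1,2) unfolding crit_points_def by blast
    moreover have "leval x (lvar k - lconst a) = 0" using x(3) is_ideal_ext(3)[OF I xa] by blast
    then have "x k = a" by (simp add: leval_diff leval_lvar leval_lconst)
    ultimately show ?thesis by blast
  qed
  then have "\<forall>a\<in>- ?U. \<exists>x. x \<in> crit_points d \<Phi> \<and> x k = a" by blast
  have "- ?U \<subseteq> (\<lambda>x. x k) ` crit_points d \<Phi>"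
  proof
    fix a assume "a \<in> - ?U"
    then obtain x where "x \<in> crit_points d \<Phi>" "x k = a" using pt by blast
    then show "a \<in> (\<lambda>x. x k) ` crit_points d \<Phi>" by (intro image_eqI[of _ _ x]) auto
  qed
  then have "finite (- ?U)" using fin by (meson finite_imageI finite_subset)
  then have "countable (- ?U)" by (rule countable_finite)
  then have "countable (?U \<union> - ?U)" using cU by (rule countable_Un[rotated])
  then show False using uncountable_UNIV_complex by simp
qed


section \<open>Finite spanning set\<close>

lemma good_alg:
  assumes K: "is_ideal d K" and kd: "k \<le> d" and p: "p \<noteq> 0" "emb k p \<in> K"
  shows "\<exists>q. q \<noteq> 0 \<and> emb k q \<in> K \<and> (k < d \<longrightarrow> poly q 0 \<noteq> 0)"
proof (cases "k < d")
  case False then show ?thesis using p by blast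
next
  case True
  obtain q where q: "p = [:- 0, 1:] ^ order 0 p * q" "\<not> [:- 0, 1:] dvd q"
    using order_decomp[OF p(1)] by blast
  let ?r = "order 0 p"
  have q0: "q \<noteq> 0" using q p(1) by auto
  have pq: "poly q 0 \<noteq> 0" using q(2) by (simp add: poly_eq_0_iff_dvd)
  have ep: "emb k p = lvar k ^ ?r * emb k q"
    by (subst q(1)) (simp add: emb_mult emb_power emb_X)
  have "xinv k ^ ?r * lvar k ^ ?r = 1"
    by (simp add: power_mult_distrib[symmetric] mult.commute[of "xinv k"] lvar_xinv)
  then have "emb k q = xinv k ^ ?r * emb k p" by (simp add: ep mult.assoc[symmetric])
  also have "\<dots> \<in> K" using True p(2) by (intro ideal_multL[OF K] ring_d_power ring_d_xinv)
  finally show ?thesis using q0 pq by blast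
qed

lemma mod_red:
  assumes K: "is_ideal d K" and kd: "k \<le> d" and q: "emb k q \<in> K"
  shows "emb k s - emb k (s mod q) \<in> K"
proof -
  have "s = s div q * q + s mod q" by simp
  then have "emb k s = emb k (s div q) * emb k q + emb k (s mod q)" by (metis emb_add emb_mult)
  then have "emb k s - emb k (s mod q) = emb k (s div q) * emb k q" by simp
  also have "\<dots> \<in> K" using kd q by (intro ideal_multL[OF K] ring_d_emb)
  finally show ?thesis .
qed

lemma uni_red:
  assumes K: "is_ideal d K" and kd: "k \<le> d" and q: "q \<noteq> 0" "emb k q \<in> K"
    and q0: "k < d \<Longrightarrow> poly q 0 \<noteq> 0" and td: "k = d \<Longrightarrow> 0 \<le> t"
  shows "\<exists>r. (r = 0 \<or> degree r < degree q) \<and>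
     Poly_Mapping.single (Poly_Mapping.single k t) 1 - emb k r \<in> K"
proof (cases "0 \<le> t")
  case True
  then obtain n where t: "t = int n" using nonneg_int_cases by blast
  let ?r = "[:0, 1:] ^ n mod q"
  have "emb k ([:0, 1:] ^ n) - emb k ?r \<in> K" by (rule mod_red[OF K kd q(2)])
  moreover have "emb k ([:0, 1:] ^ n) = Poly_Mapping.single (Poly_Mapping.single k t) 1"
    by (simp add: t emb_power emb_X single_pow)
  moreover have "?r = 0 \<or> degree ?r < degree q" using degree_mod_less[OF q(1)] by blast
  ultimately show ?thesis by metis
next
  case False
  have t: "t = - int (nat (- t))" using False by simp
  define n where "n = nat (- t)"
  have kl: "k < d" using False td kd by fastforce
  obtain c q' where cq: "q = pCons c q'" by (cases q)
  have c0: "c \<noteq> 0" using q0[OF kl] cq by simp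
  define h where "h = smult (- inverse c) q'"
  have "xinv k - emb k h = lconst (inverse c) * xinv k * emb k q"
  proof -
    have "lconst (inverse c) * xinv k * emb k q
       = lconst (inverse c * c) * xinv k + lconst (inverse c) * (lvar k * xinv k) * emb k q'"
      by (simp add: cq emb_pCons lconst_mult algebra_simps)
    also have "\<dots> = xinv k - emb k h"
      using c0 by (simp add: lvar_xinv h_def emb_smult emb_uminus lconst_uminus)
    finally show ?thesis by simp
  qed
  also have "\<dots> \<in> K" using kl q(2) by (intro ideal_multL[OF K] ring_d_mult ring_d_xinv) auto
  finally have "xinv k ^ n - emb k h ^ n \<in> K"
    using kl kd by (intro cong_power[OF K] ring_d_xinv ring_d_emb)
  moreover have "emb k (h ^ n) - emb k (h ^ n mod q) \<in> K" by (rule mod_red[OF K kd q(2)])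
  ultimately have "xinv k ^ n - emb k (h ^ n mod q) \<in> K"
    using cong_trans[OF K] by (simp add: emb_power)
  moreover have "xinv k ^ n = Poly_Mapping.single (Poly_Mapping.single k t) 1"
    using single_pow_neg[of k n] t unfolding n_def by simp
  moreover have "h ^ n mod q = 0 \<or> degree (h ^ n mod q) < degree q" using degree_mod_less[OF q(1)] by blast
  ultimately show ?thesis by metis
qed

lemma emb_sum_form: "emb k r = (\<Sum>j\<le>degree r. Poly_Mapping.single (Poly_Mapping.single k (int j)) (coeff r j))"
proof -
  have dg: "degree (map_poly lconst r) = degree r" by (rule degree_map_poly) simp
  have "emb k r = (\<Sum>j\<le>degree r. lconst (coeff r j) * lvar k ^ j)"
    unfolding emb_def poly_altdef dg by (simp add: coeff_map_poly)
  also have "\<dots> = (\<Sum>j\<le>degree r. Poly_Mapping.single (Poly_Mapping.single k (int j)) (coeff r j))"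
    by (intro sum.cong refl) (simp add: single_pow[symmetric] lconst_def mult_single)
  finally show ?thesis .
qed

lemma keys_emb: "Poly_Mapping.keys (emb k r) \<subseteq> {Poly_Mapping.single k (int j) | j. j \<le> degree r}"
proof -
  have "Poly_Mapping.keys (emb k r) \<subseteq>
     (\<Union>j\<in>{..degree r}. Poly_Mapping.keys (Poly_Mapping.single (Poly_Mapping.single k (int j)) (coeff r j)))"
    unfolding emb_sum_form by (rule keys_sum)
  also have "\<dots> \<subseteq> {Poly_Mapping.single k (int j) | j. j \<le> degree r}" by auto
  finally show ?thesis .
qed

definition boxB :: "(nat \<Rightarrow> nat) \<Rightarrow> nat set \<Rightarrow> (nat \<Rightarrow>\<^sub>0 int) set" where
  "boxB D S = {\<beta>. Poly_Mapping.keys \<beta> \<subseteq> S \<and>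
     (\<forall>i\<in>Poly_Mapping.keys \<beta>. 0 \<le> Poly_Mapping.lookup \<beta> i \<and> Poly_Mapping.lookup \<beta> i < int (D i))}"

lemma boxB_mono: "S \<subseteq> T \<Longrightarrow> boxB D S \<subseteq> boxB D T"
  unfolding boxB_def by auto

lemma finite_boxB: "finite S \<Longrightarrow> finite (boxB D S)"
proof -
  assume S: "finite S"
  have "boxB D S \<subseteq> {\<beta>. Poly_Mapping.keys \<beta> \<subseteq> S \<and> (\<forall>i. Poly_Mapping.lookup \<beta> i \<in> {0..int (D i)})}"
  proof
    fix \<beta> assume b: "\<beta> \<in> boxB D S"
    have "Poly_Mapping.lookup \<beta> i \<in> {0..int (D i)}" for i
    proof (cases "i \<in> Poly_Mapping.keys \<beta>")
      case True then show ?thesis using b unfolding boxB_def by auto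
    next
      case False then show ?thesis by (simp add: in_keys_iff)
    qed
    then show "\<beta> \<in> {\<beta>. Poly_Mapping.keys \<beta> \<subseteq> S \<and> (\<forall>i. Poly_Mapping.lookup \<beta> i \<in> {0..int (D i)})}"
      using b unfolding boxB_def by blast
  qed
  moreover have "finite {\<beta>. Poly_Mapping.keys \<beta> \<subseteq> S \<and> (\<forall>i. Poly_Mapping.lookup \<beta> i \<in> {0..int (D i)})}"
    using finite_keys_bounded[OF S, of "\<lambda>i. {0..int (D i)}"] by simp
  ultimately show ?thesis by (rule finite_subset)
qed

lemma boxB_add:
  assumes j: "j < D i" and b: "b \<in> boxB D S" and iS: "i \<notin> S"
  shows "Poly_Mapping.single i (int j) + b \<in> boxB D (insert i S)"
proof -
  have kb: "Poly_Mapping.keys b \<subseteq> S" using b by (simp add: boxB_def)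
  then have bi: "Poly_Mapping.lookup b i = 0" using iS by (auto simp: in_keys_iff)
  have lk: "Poly_Mapping.lookup (Poly_Mapping.single i (int j) + b) l =
      (if l = i then int j else Poly_Mapping.lookup b l)" for l
    using bi by (simp add: lookup_add lookup_single when_def)
  have "Poly_Mapping.keys (Poly_Mapping.single i (int j) + b) \<subseteq> insert i S"
    using keys_add[of "Poly_Mapping.single i (int j)" b] kb by (auto split: if_splits)
  moreover have "0 \<le> Poly_Mapping.lookup (Poly_Mapping.single i (int j) + b) l \<and>
      Poly_Mapping.lookup (Poly_Mapping.single i (int j) + b) l < int (D l)"
    if "l \<in> Poly_Mapping.keys (Poly_Mapping.single i (int j) + b)" for l
  proof (cases "l = i")
    case True then show ?thesis using j by (simp add: lk)
  next
    case False
    then have "l \<in> Poly_Mapping.keys b" using that by (simp add: in_keys_iff lk)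
    then show ?thesis using b False by (simp add: lk boxB_def)
  qed
  ultimately show ?thesis unfolding boxB_def by blast
qed

lemma multi_red:
  assumes K: "is_ideal d K"
    and q: "\<And>k. k \<le> d \<Longrightarrow> q k \<noteq> 0 \<and> emb k (q k) \<in> K \<and> (k < d \<longrightarrow> poly (q k) 0 \<noteq> 0)"
    and ok: "okexp d \<alpha>"
  shows "\<exists>g\<in>ring_d d. Poly_Mapping.keys g \<subseteq> boxB (\<lambda>k. degree (q k)) (Poly_Mapping.keys \<alpha>) \<and>
            Poly_Mapping.single \<alpha> 1 - g \<in> K"
  using ok
proof (induction \<alpha> rule: update_induct)
  case const
  have "(1::lpoly) \<in> ring_d d" by simp
  moreover have "Poly_Mapping.keys (1::lpoly) \<subseteq> boxB (\<lambda>k. degree (q k)) (Poly_Mapping.keys 0)"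
    by (simp add: boxB_def)
  moreover have "Poly_Mapping.single 0 1 - (1::lpoly) \<in> K" using ideal_0[OF K] by simp
  ultimately show ?case by blast
next
  case (update \<beta> i t)
  let ?D = "\<lambda>k. degree (q k)"
  have keysu: "Poly_Mapping.keys (Poly_Mapping.update i t \<beta>) = insert i (Poly_Mapping.keys \<beta>)"
    using keys_update_nz[OF update(1,2)] .
  have upd: "Poly_Mapping.update i t \<beta> = Poly_Mapping.single i t + \<beta>"
    using update_eq_single_add[OF update(1)] .
  have id: "i \<le> d" using update.prems keysu unfolding okexp_def by auto
  have lt: "Poly_Mapping.lookup (Poly_Mapping.update i t \<beta>) i = t" by (simp add: lookup_update)
  have td: "0 \<le> t" if "i = d"
  proof -
    have "0 \<le> Poly_Mapping.lookup (Poly_Mapping.update i t \<beta>) d"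
      using update.prems unfolding okexp_def by blast
    then show ?thesis using lt that by simp
  qed
  have okb: "okexp d \<beta>"
  proof -
    have "Poly_Mapping.keys \<beta> \<subseteq> {..d}" using update.prems keysu unfolding okexp_def by auto
    moreover have "0 \<le> Poly_Mapping.lookup \<beta> d"
    proof (cases "i = d")
      case True then show ?thesis using update(1) by (simp add: in_keys_iff)
    next
      case False
      then have "Poly_Mapping.lookup \<beta> d = Poly_Mapping.lookup (Poly_Mapping.update i t \<beta>) d"
        by (simp add: lookup_update)
      then show ?thesis using update.prems unfolding okexp_def by simp
    qed
    ultimately show ?thesis unfolding okexp_def by blast
  qed
  obtain g' where g': "g' \<in> ring_d d" "Poly_Mapping.keys g' \<subseteq> boxB ?D (Poly_Mapping.keys \<beta>)"
    "Poly_Mapping.single \<beta> 1 - g' \<in> K"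
    using update.IH[OF okb] by blast
  obtain r where r: "r = 0 \<or> degree r < ?D i"
    "Poly_Mapping.single (Poly_Mapping.single i t) 1 - emb i r \<in> K"
    using uni_red[OF K id _ _ _ td] q[OF id] by blast
  have okt: "okexp d (Poly_Mapping.single i t)"
    using id td by (auto simp: okexp_def lookup_single when_def)
  have "Poly_Mapping.single (Poly_Mapping.single i t) 1 * Poly_Mapping.single \<beta> 1 - emb i r * g' \<in> K"
    by (rule cong_mult[OF K r(2) g'(3) ring_d_single[OF okt] g'(1)])
  moreover have "Poly_Mapping.single (Poly_Mapping.single i t) (1::complex) * Poly_Mapping.single \<beta> 1
     = Poly_Mapping.single (Poly_Mapping.update i t \<beta>) 1"
    by (simp add: upd mult_single)
  moreover have "emb i r * g' \<in> ring_d d" using id g'(1) by (intro ring_d_mult ring_d_emb)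
  moreover have "Poly_Mapping.keys (emb i r * g') \<subseteq> boxB ?D (Poly_Mapping.keys (Poly_Mapping.update i t \<beta>))"
  proof
    fix \<gamma> assume "\<gamma> \<in> Poly_Mapping.keys (emb i r * g')"
    then obtain a b where ab: "\<gamma> = a + b" "a \<in> Poly_Mapping.keys (emb i r)" "b \<in> Poly_Mapping.keys g'"
      using keys_mult by blast
    from ab(2) have "r \<noteq> 0" by (auto)
    with ab(2) keys_emb obtain j where j: "a = Poly_Mapping.single i (int j)" "j \<le> degree r" by blast
    have "j < ?D i" using j(2) r(1) \<open>r \<noteq> 0\<close> by simp
    then have "a + b \<in> boxB ?D (insert i (Poly_Mapping.keys \<beta>))"
      unfolding j(1) using ab(3) g'(2) update(1) by (intro boxB_add) auto
    then show "\<gamma> \<in> boxB ?D (Poly_Mapping.keys (Poly_Mapping.update i t \<beta>))" using ab(1) keysu by simp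
  qed
  ultimately show ?case by metis
qed


definition spans :: "nat \<Rightarrow> lpoly \<Rightarrow> nat \<Rightarrow> bool" where
  "spans d \<Phi> n \<longleftrightarrow> (\<exists>b::nat \<Rightarrow> lpoly. (\<forall>k<n. b k \<in> ring_d d) \<and>
           (\<forall>f\<in>ring_d d. \<exists>(c::nat \<Rightarrow> complex) (g::nat \<Rightarrow> lpoly).
              (\<forall>j\<le>d. g j \<in> ring_d d) \<and>
              f = (\<Sum>k<n. lconst (c k) * b k) + (\<Sum>j\<le>d. g j * crit_gens d \<Phi> j)))"

lemma crit_degree_eq: "finite (crit_points d \<Phi>) \<Longrightarrow> crit_degree d \<Phi> = (LEAST n. spans d \<Phi> n)"
  by (simp add: crit_degree_def spans_def)

lemma keys_lconst_mult: "Poly_Mapping.keys (lconst c * p) \<subseteq> Poly_Mapping.keys p"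
  by (auto simp: in_keys_iff)

lemma all_red:
  assumes K: "is_ideal d K"
    and q: "\<And>k. k \<le> d \<Longrightarrow> q k \<noteq> 0 \<and> emb k (q k) \<in> K \<and> (k < d \<longrightarrow> poly (q k) 0 \<noteq> 0)"
    and f: "f \<in> ring_d d"
  shows "\<exists>g. Poly_Mapping.keys g \<subseteq> boxB (\<lambda>k. degree (q k)) {..d} \<and> f - g \<in> K"
proof -
  let ?B = "boxB (\<lambda>k. degree (q k)) {..d}"
  have "\<forall>\<alpha>\<in>Poly_Mapping.keys f. \<exists>g. g \<in> ring_d d \<and> Poly_Mapping.keys g \<subseteq> ?B \<and> Poly_Mapping.single \<alpha> 1 - g \<in> K"
  proof
    fix \<alpha> assume a: "\<alpha> \<in> Poly_Mapping.keys f"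
    then have ok: "okexp d \<alpha>" using f by (simp add: ring_d_iff)
    then obtain g where g: "g \<in> ring_d d" "Poly_Mapping.keys g \<subseteq> boxB (\<lambda>k. degree (q k)) (Poly_Mapping.keys \<alpha>)"
      "Poly_Mapping.single \<alpha> 1 - g \<in> K"
      using multi_red[OF K q ok] by blast
    have "boxB (\<lambda>k. degree (q k)) (Poly_Mapping.keys \<alpha>) \<subseteq> ?B"
      using ok by (intro boxB_mono) (simp add: okexp_def)
    then show "\<exists>g. g \<in> ring_d d \<and> Poly_Mapping.keys g \<subseteq> ?B \<and> Poly_Mapping.single \<alpha> 1 - g \<in> K"
      using g by blast
  qed
  from bchoice[OF this] obtain G where
    G: "\<forall>\<alpha>\<in>Poly_Mapping.keys f. G \<alpha> \<in> ring_d d \<and> Poly_Mapping.keys (G \<alpha>) \<subseteq> ?B \<and> Poly_Mapping.single \<alpha> 1 - G \<alpha> \<in> K"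
    by blast
  define g where "g = (\<Sum>\<alpha>\<in>Poly_Mapping.keys f. lconst (Poly_Mapping.lookup f \<alpha>) * G \<alpha>)"
  have "Poly_Mapping.keys g \<subseteq> (\<Union>\<alpha>\<in>Poly_Mapping.keys f. Poly_Mapping.keys (lconst (Poly_Mapping.lookup f \<alpha>) * G \<alpha>))"
    unfolding g_def by (rule keys_sum)
  also have "\<dots> \<subseteq> ?B" using G keys_lconst_mult by blast
  finally have kg: "Poly_Mapping.keys g \<subseteq> ?B" .
  have fe: "f = (\<Sum>\<alpha>\<in>Poly_Mapping.keys f. lconst (Poly_Mapping.lookup f \<alpha>) * Poly_Mapping.single \<alpha> 1)"
    by (subst poly_expand[of f], rule sum.cong, rule refl, rule single_as_lconst)
  have "f - g = (\<Sum>\<alpha>\<in>Poly_Mapping.keys f. lconst (Poly_Mapping.lookup f \<alpha>) * (Poly_Mapping.single \<alpha> 1 - G \<alpha>))"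
    by (subst fe) (simp add: g_def sum_subtractf[symmetric] right_diff_distrib)
  also have "\<dots> \<in> K" using G by (intro ideal_sum[OF K] ideal_lconst[OF K]) blast
  finally show ?thesis using kg by blast
qed

lemma exists_spans:
  assumes Gs: "\<forall>j\<le>d. crit_gens d \<Phi> j \<in> ring_d d"
    and fin: "finite (crit_points d \<Phi>)"
  shows "\<exists>n. spans d \<Phi> n"
proof -
  let ?I = "cideal d \<Phi>"
  have I: "is_ideal d ?I" using is_ideal_cideal[OF Gs] .
  have "\<forall>k. \<exists>q. k \<le> d \<longrightarrow> q \<noteq> 0 \<and> emb k q \<in> ?I \<and> (k < d \<longrightarrow> poly q 0 \<noteq> 0)"
  proof
    fix k show "\<exists>q. k \<le> d \<longrightarrow> q \<noteq> 0 \<and> emb k q \<in> ?I \<and> (k < d \<longrightarrow> poly q 0 \<noteq> 0)"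
    proof (cases "k \<le> d")
      case True
      then obtain p where "p \<noteq> 0" "emb k p \<in> ?I" using exists_alg[OF Gs fin] by blast
      then show ?thesis using good_alg[OF I True] by blast
    qed simp
  qed
  from choice[OF this] obtain q where
    q0: "\<forall>k. k \<le> d \<longrightarrow> q k \<noteq> 0 \<and> emb k (q k) \<in> ?I \<and> (k < d \<longrightarrow> poly (q k) 0 \<noteq> 0)"
    by blast
  have q: "\<And>k. k \<le> d \<Longrightarrow> q k \<noteq> 0 \<and> emb k (q k) \<in> ?I \<and> (k < d \<longrightarrow> poly (q k) 0 \<noteq> 0)"
    using q0 by blast
  let ?B = "boxB (\<lambda>k. degree (q k)) {..d}"
  have finB: "finite ?B" by (rule finite_boxB) simp
  define n where "n = card ?B"
  obtain h where h: "bij_betw h {0..<n} ?B" using ex_bij_betw_nat_finite[OF finB] n_def by blast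
  define b where "b k = Poly_Mapping.single (h k) (1::complex)" for k
  have "b k \<in> ring_d d" if "k < n" for k
  proof -
    have hk: "h k \<in> ?B" using h that by (auto dest: bij_betwE)
    have "okexp d (h k)"
    proof -
      have "Poly_Mapping.keys (h k) \<subseteq> {..d}" using hk by (simp add: boxB_def)
      moreover have "0 \<le> Poly_Mapping.lookup (h k) d"
      proof (cases "d \<in> Poly_Mapping.keys (h k)")
        case True then show ?thesis using hk by (simp add: boxB_def)
      next
        case False then show ?thesis by (simp add: in_keys_iff)
      qed
      ultimately show ?thesis by (simp add: okexp_def)
    qed
    then show ?thesis unfolding b_def by (rule ring_d_single)
  qed
  moreover have "\<exists>(c::nat \<Rightarrow> complex) (gg::nat \<Rightarrow> lpoly). (\<forall>j\<le>d. gg j \<in> ring_d d) \<and>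
              f = (\<Sum>k<n. lconst (c k) * b k) + (\<Sum>j\<le>d. gg j * crit_gens d \<Phi> j)"
    if f: "f \<in> ring_d d" for f
  proof -
    obtain g where g: "Poly_Mapping.keys g \<subseteq> ?B" "f - g \<in> ?I" using all_red[OF I q f] by blast
    then obtain gg where gg: "\<forall>j\<le>d. gg j \<in> ring_d d" "f - g = (\<Sum>j\<le>d. gg j * crit_gens d \<Phi> j)"
      unfolding cideal_def by blast
    have "g = (\<Sum>\<beta>\<in>Poly_Mapping.keys g. Poly_Mapping.single \<beta> (Poly_Mapping.lookup g \<beta>))"
      by (rule poly_expand)
    also have "\<dots> = (\<Sum>\<beta>\<in>?B. Poly_Mapping.single \<beta> (Poly_Mapping.lookup g \<beta>))"
      using g(1) finB by (intro sum.mono_neutral_left) (auto simp: in_keys_iff)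
    also have "\<dots> = (\<Sum>\<beta>\<in>?B. lconst (Poly_Mapping.lookup g \<beta>) * Poly_Mapping.single \<beta> 1)"
      by (intro sum.cong refl single_as_lconst)
    also have "\<dots> = (\<Sum>k\<in>{0..<n}. lconst (Poly_Mapping.lookup g (h k)) * b k)"
      unfolding b_def by (rule sum.reindex_bij_betw[OF h, symmetric])
    finally have gsum: "g = (\<Sum>k<n. lconst (Poly_Mapping.lookup g (h k)) * b k)"
      by (simp add: lessThan_atLeast0)
    have "f = g + (f - g)" by simp
    then have "f = (\<Sum>k<n. lconst (Poly_Mapping.lookup g (h k)) * b k) + (\<Sum>j\<le>d. gg j * crit_gens d \<Phi> j)"
      using gg(2) gsum by simp
    then show ?thesis using gg(1) by (intro exI[of _ "\<lambda>k. Poly_Mapping.lookup g (h k)"] exI[of _ gg]) simp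
  qed
  ultimately have "spans d \<Phi> n" unfolding spans_def by (intro exI[of _ b] conjI allI impI ballI) auto
  then show ?thesis by blast
qed


definition lsum :: "((nat \<Rightarrow>\<^sub>0 int) \<Rightarrow> complex \<Rightarrow> 'b::comm_monoid_add) \<Rightarrow> lpoly \<Rightarrow> 'b" where
  "lsum \<phi> p = (\<Sum>\<alpha>\<in>Poly_Mapping.keys p. \<phi> \<alpha> (Poly_Mapping.lookup p \<alpha>))"

locale lhom =
  fixes \<phi> :: "(nat \<Rightarrow>\<^sub>0 int) \<Rightarrow> complex \<Rightarrow> 'b::comm_ring_1" and S :: "(nat \<Rightarrow>\<^sub>0 int) set"
  assumes \<phi>_add: "\<phi> \<alpha> (a + b) = \<phi> \<alpha> a + \<phi> \<alpha> b"
    and \<phi>_mult: "\<alpha> \<in> S \<Longrightarrow> \<beta> \<in> S \<Longrightarrow> \<phi> (\<alpha> + \<beta>) (a * b) = \<phi> \<alpha> a * \<phi> \<beta> b"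
    and \<phi>_one: "\<phi> 0 1 = 1"
    and S0: "0 \<in> S" and Sadd: "\<alpha> \<in> S \<Longrightarrow> \<beta> \<in> S \<Longrightarrow> \<alpha> + \<beta> \<in> S"
begin

lemma \<phi>_0 [simp]: "\<phi> \<alpha> 0 = 0"
  using \<phi>_add[of \<alpha> 0 0] by simp

lemma \<phi>_uminus: "\<phi> \<alpha> (- a) = - \<phi> \<alpha> a"
proof -
  have "\<phi> \<alpha> a + \<phi> \<alpha> (- a) = 0" using \<phi>_add[of \<alpha> a "- a"] by simp
  from minus_unique[OF this] show ?thesis by simp
qed

lemma L_superset:
  assumes "finite T" "Poly_Mapping.keys p \<subseteq> T"
  shows "lsum \<phi> p = (\<Sum>\<alpha>\<in>T. \<phi> \<alpha> (Poly_Mapping.lookup p \<alpha>))"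
  unfolding lsum_def using assms by (intro sum.mono_neutral_left) (auto simp: in_keys_iff)

lemma L_add: "lsum \<phi> (p + q) = lsum \<phi> p + lsum \<phi> q"
proof -
  let ?T = "Poly_Mapping.keys p \<union> Poly_Mapping.keys q"
  have "lsum \<phi> (p + q) = (\<Sum>\<alpha>\<in>?T. \<phi> \<alpha> (Poly_Mapping.lookup (p + q) \<alpha>))"
    using keys_add[of p q] by (intro L_superset) auto
  also have "\<dots> = (\<Sum>\<alpha>\<in>?T. \<phi> \<alpha> (Poly_Mapping.lookup p \<alpha>)) + (\<Sum>\<alpha>\<in>?T. \<phi> \<alpha> (Poly_Mapping.lookup q \<alpha>))"
    by (simp add: lookup_add \<phi>_add sum.distrib)
  also have "\<dots> = lsum \<phi> p + lsum \<phi> q"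
    by (subst (1 2) L_superset[of ?T]) auto
  finally show ?thesis .
qed

lemma L_0 [simp]: "lsum \<phi> 0 = 0"
  by (simp add: lsum_def)

lemma L_uminus: "lsum \<phi> (- p) = - lsum \<phi> p"
  unfolding lsum_def by (simp add: \<phi>_uminus sum_negf)

lemma L_diff: "lsum \<phi> (p - q) = lsum \<phi> p - lsum \<phi> q"
  using L_add[of p "- q"] L_uminus[of q] by simp

lemma L_sum: "lsum \<phi> (\<Sum>i\<in>A. f i) = (\<Sum>i\<in>A. lsum \<phi> (f i))"
  by (induction A rule: infinite_finite_induct) (auto simp: L_add)

lemma L_single: "lsum \<phi> (Poly_Mapping.single \<alpha> a) = \<phi> \<alpha> a"
  by (cases "a = 0") (simp_all add: lsum_def)

lemma L_mult_single:
  assumes "a \<in> S" "Poly_Mapping.keys q \<subseteq> S"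
  shows "lsum \<phi> (Poly_Mapping.single a b * q) = \<phi> a b * lsum \<phi> q"
  using assms(2)
proof (induction q rule: update_induct)
  case const then show ?case by simp
next
  case (update g c e)
  have u: "Poly_Mapping.update c e g = Poly_Mapping.single c e + g" by (rule update_eq_single_add[OF update(1)])
  have ks: "Poly_Mapping.keys (Poly_Mapping.update c e g) = insert c (Poly_Mapping.keys g)"
    by (rule keys_update_nz[OF update(1,2)])
  have cS: "c \<in> S" and gS: "Poly_Mapping.keys g \<subseteq> S" using update.prems ks by auto
  have "lsum \<phi> (Poly_Mapping.single a b * Poly_Mapping.update c e g)
      = lsum \<phi> (Poly_Mapping.single (a + c) (b * e)) + lsum \<phi> (Poly_Mapping.single a b * g)"
    by (simp add: u distrib_left mult_single L_add)
  also have "\<dots> = \<phi> a b * \<phi> c e + \<phi> a b * lsum \<phi> g"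
    using update.IH[OF gS] by (simp add: L_single \<phi>_mult[OF assms(1) cS])
  also have "\<dots> = \<phi> a b * lsum \<phi> (Poly_Mapping.update c e g)"
    by (simp add: u L_add L_single distrib_left)
  finally show ?case .
qed

lemma L_mult:
  assumes "Poly_Mapping.keys p \<subseteq> S" "Poly_Mapping.keys q \<subseteq> S"
  shows "lsum \<phi> (p * q) = lsum \<phi> p * lsum \<phi> q"
  using assms(1)
proof (induction p rule: update_induct)
  case const then show ?case by simp
next
  case (update f a b)
  have u: "Poly_Mapping.update a b f = Poly_Mapping.single a b + f" by (rule update_eq_single_add[OF update(1)])
  have ks: "Poly_Mapping.keys (Poly_Mapping.update a b f) = insert a (Poly_Mapping.keys f)"
    by (rule keys_update_nz[OF update(1,2)])
  have aS: "a \<in> S" and fS: "Poly_Mapping.keys f \<subseteq> S" using update.prems ks by auto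
  have "lsum \<phi> (Poly_Mapping.update a b f * q) = lsum \<phi> (Poly_Mapping.single a b * q) + lsum \<phi> (f * q)"
    by (simp add: u distrib_right L_add)
  also have "\<dots> = \<phi> a b * lsum \<phi> q + lsum \<phi> f * lsum \<phi> q"
    using L_mult_single[OF aS assms(2)] update.IH[OF fS] by simp
  also have "\<dots> = lsum \<phi> (Poly_Mapping.update a b f) * lsum \<phi> q"
    by (simp add: u L_add L_single distrib_right)
  finally show ?case .
qed

definition SR :: "lpoly set" where "SR = {p. Poly_Mapping.keys p \<subseteq> S}"

lemma SR_mult: "p \<in> SR \<Longrightarrow> q \<in> SR \<Longrightarrow> p * q \<in> SR"
  unfolding SR_def using keys_mult[of p q] Sadd by blast

lemma SR_1: "1 \<in> SR"
  unfolding SR_def using S0 by simp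

lemma L_prod: "(\<And>i. i \<in> A \<Longrightarrow> f i \<in> SR) \<Longrightarrow> lsum \<phi> (\<Prod>i\<in>A. f i) = (\<Prod>i\<in>A. lsum \<phi> (f i))"
proof (induction A rule: infinite_finite_induct)
  case (infinite A) then show ?case using L_single[of 0 1] \<phi>_one by (simp add: single_one[symmetric] del: single_one)
next
  case empty then show ?case using L_single[of 0 1] \<phi>_one by (simp add: single_one[symmetric] del: single_one)
next
  case (insert x F)
  have "(\<Prod>i\<in>F. f i) \<in> SR" using insert.prems
    by (induction F rule: infinite_finite_induct) (auto intro: SR_mult SR_1)
  then show ?case using insert by (simp add: L_mult[unfolded SR_def[symmetric]] SR_def)
qed

end


section \<open>The involution z -> 1/z\<close>

definition negz :: "nat \<Rightarrow> (nat \<Rightarrow>\<^sub>0 int) \<Rightarrow> (nat \<Rightarrow>\<^sub>0 int)" where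
  "negz d \<alpha> = (\<Sum>i\<in>Poly_Mapping.keys \<alpha>. Poly_Mapping.single i (if i < d then - Poly_Mapping.lookup \<alpha> i else Poly_Mapping.lookup \<alpha> i))"

lemma lookup_negz: "Poly_Mapping.lookup (negz d \<alpha>) j = (if j < d then - Poly_Mapping.lookup \<alpha> j else Poly_Mapping.lookup \<alpha> j)"
proof -
  have "Poly_Mapping.lookup (negz d \<alpha>) j = (\<Sum>i\<in>Poly_Mapping.keys \<alpha>.
      (if i = j then (if i < d then - Poly_Mapping.lookup \<alpha> i else Poly_Mapping.lookup \<alpha> i) else 0))"
    unfolding negz_def by (simp add: lookup_sum lookup_single when_def)
  also have "\<dots> = (if j < d then - Poly_Mapping.lookup \<alpha> j else Poly_Mapping.lookup \<alpha> j)"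
    by (simp add: in_keys_iff)
  finally show ?thesis .
qed

lemma negz_add: "negz d (\<alpha> + \<beta>) = negz d \<alpha> + negz d \<beta>"
  by (rule poly_mapping_eqI) (simp add: lookup_negz lookup_add)

lemma negz_negz [simp]: "negz d (negz d \<alpha>) = \<alpha>"
  by (rule poly_mapping_eqI) (simp add: lookup_negz)

lemma negz_0 [simp]: "negz d 0 = 0"
  by (rule poly_mapping_eqI) (simp add: lookup_negz)

lemma negz_lattice: "\<alpha> \<in> lattice d \<Longrightarrow> negz d \<alpha> = - \<alpha>"
  by (rule poly_mapping_eqI) (auto simp: lookup_negz lattice_def in_keys_iff)

lemma negz_single_d: "negz d (Poly_Mapping.single d 1) = Poly_Mapping.single d 1"
  by (rule poly_mapping_eqI) (simp add: lookup_negz lookup_single when_def)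

lemma negz_eq_iff: "negz d \<alpha> = \<beta> \<longleftrightarrow> \<alpha> = negz d \<beta>"
  by auto

definition sig :: "nat \<Rightarrow> lpoly \<Rightarrow> lpoly" where
  "sig d = lsum (\<lambda>\<alpha> a. Poly_Mapping.single (negz d \<alpha>) a)"

lemma lhom_sig: "lhom (\<lambda>\<alpha> a. Poly_Mapping.single (negz d \<alpha>) (a::complex)) UNIV"
  by unfold_locales (simp_all add: single_add mult_single negz_add)

lemma lookup_sig: "Poly_Mapping.lookup (sig d p) \<beta> = Poly_Mapping.lookup p (negz d \<beta>)"
proof -
  have "Poly_Mapping.lookup (sig d p) \<beta> = (\<Sum>\<alpha>\<in>Poly_Mapping.keys p.
      (if \<alpha> = negz d \<beta> then Poly_Mapping.lookup p \<alpha> else 0))"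
    unfolding sig_def lsum_def by (simp add: lookup_sum lookup_single when_def negz_eq_iff)
  also have "\<dots> = Poly_Mapping.lookup p (negz d \<beta>)"
    by (simp add: in_keys_iff)
  finally show ?thesis .
qed

lemma sig_add: "sig d (p + q) = sig d p + sig d q"
  unfolding sig_def by (rule lhom.L_add[OF lhom_sig])

lemma sig_diff: "sig d (p - q) = sig d p - sig d q"
  unfolding sig_def by (rule lhom.L_diff[OF lhom_sig])

lemma sig_sum: "sig d (\<Sum>i\<in>A. f i) = (\<Sum>i\<in>A. sig d (f i))"
  unfolding sig_def by (rule lhom.L_sum[OF lhom_sig])

lemma sig_mult: "sig d (p * q) = sig d p * sig d q"
  unfolding sig_def by (rule lhom.L_mult[OF lhom_sig]) auto

lemma sig_prod: "sig d (\<Prod>i\<in>A. f i) = (\<Prod>i\<in>A. sig d (f i))"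
  unfolding sig_def by (rule lhom.L_prod[OF lhom_sig]) (simp add: lhom.SR_def[OF lhom_sig])

lemma sig_single: "sig d (Poly_Mapping.single \<alpha> a) = Poly_Mapping.single (negz d \<alpha>) a"
  unfolding sig_def by (rule lhom.L_single[OF lhom_sig])

lemma sig_of_int: "sig d (of_int c) = of_int c"
  using sig_single[of d 0 "of_int c"] by (simp add: single_of_int)

lemma sig_lconst: "sig d (lconst c) = lconst c"
  unfolding lconst_def by (simp add: sig_single)

lemma sig_lvar_d: "sig d (lvar d) = lvar d"
  unfolding lvar_def by (simp add: sig_single negz_single_d)

lemma sig_0 [simp]: "sig d 0 = 0"
  by (simp add: sig_def lsum_def)

lemma lookup_zdz: "Poly_Mapping.lookup (zdz i p) \<beta> = of_int (Poly_Mapping.lookup \<beta> i) * Poly_Mapping.lookup p \<beta>"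
proof -
  have "Poly_Mapping.lookup (zdz i p) \<beta> = (\<Sum>\<alpha>\<in>Poly_Mapping.keys p.
      (if \<alpha> = \<beta> then of_int (Poly_Mapping.lookup \<alpha> i) * Poly_Mapping.lookup p \<alpha> else 0))"
    unfolding zdz_def by (simp add: lookup_sum lookup_single when_def)
  also have "\<dots> = of_int (Poly_Mapping.lookup \<beta> i) * Poly_Mapping.lookup p \<beta>"
    by (simp add: in_keys_iff)
  finally show ?thesis .
qed

lemma zdz_sig: "i < d \<Longrightarrow> zdz i (sig d p) = - sig d (zdz i p)"
  by (rule poly_mapping_eqI) (simp add: lookup_zdz lookup_sig lookup_negz)

lemma ring_d_zdz: "p \<in> ring_d d \<Longrightarrow> zdz i p \<in> ring_d d"
  unfolding zdz_def by (intro ring_d_sum ring_d_single) (auto simp: ring_d_iff)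

section \<open>Evaluation at sign vectors\<close>

definition wt :: "nat set \<Rightarrow> (nat \<Rightarrow>\<^sub>0 int) \<Rightarrow> complex" where
  "wt B \<alpha> = (\<Prod>i\<in>B. (-1) powi Poly_Mapping.lookup \<alpha> i)"

lemma wt_add: "wt B (\<alpha> + \<beta>) = wt B \<alpha> * wt B \<beta>"
  unfolding wt_def by (simp add: lookup_add power_int_add prod.distrib)

lemma wt_0 [simp]: "wt B 0 = 1"
  by (simp add: wt_def)

lemma minus_one_powi_neg: "(-1::complex) powi (- a) = (-1) powi a"
proof -
  have "(-1::complex) powi (- a) = inverse ((-1) powi a)" by (rule power_int_minus)
  also have "\<dots> = (inverse (-1)) powi a" by (rule power_int_inverse[symmetric])
  also have "\<dots> = (-1) powi a" by simp
  finally show ?thesis .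
qed

lemma wt_negz: "B \<subseteq> {..<d} \<Longrightarrow> wt B (negz d \<alpha>) = wt B \<alpha>"
  unfolding wt_def by (intro prod.cong refl) (auto simp: lookup_negz minus_one_powi_neg)

definition Ev :: "nat \<Rightarrow> nat set \<Rightarrow> lpoly \<Rightarrow> complex poly" where
  "Ev d B = lsum (\<lambda>\<alpha> a. monom (a * wt B \<alpha>) (nat (Poly_Mapping.lookup \<alpha> d)))"

lemma lhom_Ev: "lhom (\<lambda>\<alpha> a. monom (a * wt B \<alpha>) (nat (Poly_Mapping.lookup \<alpha> d))) {\<alpha>. okexp d \<alpha>}"
proof unfold_locales
  fix \<alpha> a b show "monom ((a + b) * wt B \<alpha>) (nat (Poly_Mapping.lookup \<alpha> d)) =
     monom (a * wt B \<alpha>) (nat (Poly_Mapping.lookup \<alpha> d)) + monom (b * wt B \<alpha>) (nat (Poly_Mapping.lookup \<alpha> d))"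
    by (simp add: distrib_right add_monom)
next
  fix \<alpha> \<beta> a b assume "\<alpha> \<in> {\<alpha>. okexp d \<alpha>}" "\<beta> \<in> {\<alpha>. okexp d \<alpha>}"
  then have "0 \<le> Poly_Mapping.lookup \<alpha> d" "0 \<le> Poly_Mapping.lookup \<beta> d" by (auto simp: okexp_def)
  then show "monom (a * b * wt B (\<alpha> + \<beta>)) (nat (Poly_Mapping.lookup (\<alpha> + \<beta>) d)) =
     monom (a * wt B \<alpha>) (nat (Poly_Mapping.lookup \<alpha> d)) * monom (b * wt B \<beta>) (nat (Poly_Mapping.lookup \<beta> d))"
    by (simp add: wt_add lookup_add nat_add_distrib mult_monom algebra_simps)
next
  show "monom (1 * wt B 0) (nat (Poly_Mapping.lookup 0 d)) = 1" by (simp add: one_pCons monom_0)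
qed (auto intro: okexp_add)

lemma SR_Ev: "lhom.SR {\<alpha>. okexp d \<alpha>} = ring_d d"
  by (auto simp: lhom.SR_def[OF lhom_Ev] ring_d_iff)

lemma Ev_add: "Ev d B (p + q) = Ev d B p + Ev d B q"
  unfolding Ev_def by (rule lhom.L_add[OF lhom_Ev])

lemma Ev_uminus: "Ev d B (- p) = - Ev d B p"
  unfolding Ev_def by (rule lhom.L_uminus[OF lhom_Ev])

lemma Ev_diff: "Ev d B (p - q) = Ev d B p - Ev d B q"
  unfolding Ev_def by (rule lhom.L_diff[OF lhom_Ev])

lemma Ev_sum: "Ev d B (\<Sum>i\<in>A. f i) = (\<Sum>i\<in>A. Ev d B (f i))"
  unfolding Ev_def by (rule lhom.L_sum[OF lhom_Ev])

lemma Ev_mult: "p \<in> ring_d d \<Longrightarrow> q \<in> ring_d d \<Longrightarrow> Ev d B (p * q) = Ev d B p * Ev d B q"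
  unfolding Ev_def by (rule lhom.L_mult[OF lhom_Ev]) (auto simp: ring_d_iff)

lemma Ev_prod: "(\<And>i. i \<in> A \<Longrightarrow> f i \<in> ring_d d) \<Longrightarrow> Ev d B (\<Prod>i\<in>A. f i) = (\<Prod>i\<in>A. Ev d B (f i))"
  unfolding Ev_def by (rule lhom.L_prod[OF lhom_Ev]) (simp add: SR_Ev)

lemma Ev_single: "Ev d B (Poly_Mapping.single \<alpha> a) = monom (a * wt B \<alpha>) (nat (Poly_Mapping.lookup \<alpha> d))"
  unfolding Ev_def by (rule lhom.L_single[OF lhom_Ev])

lemma Ev_lconst: "Ev d B (lconst c) = [:c:]"
  unfolding lconst_def by (simp add: Ev_single monom_0)

lemma Ev_of_int: "Ev d B (of_int c) = of_int c"
  using Ev_lconst[of d B "of_int c"] unfolding lconst_def by (simp add: single_of_int of_int_poly)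

lemma wt_single_var: "finite B \<Longrightarrow> wt B (Poly_Mapping.single i 1) = (if i \<in> B then -1 else 1)"
proof (cases "i \<in> B")
  case True
  assume fB: "finite B"
  have "wt B (Poly_Mapping.single i 1) = (-1) powi 1 * (\<Prod>j\<in>B - {i}. (-1) powi Poly_Mapping.lookup (Poly_Mapping.single i 1) j)"
    unfolding wt_def using True fB by (simp add: prod.remove)
  also have "(\<Prod>j\<in>B - {i}. (-1::complex) powi Poly_Mapping.lookup (Poly_Mapping.single i 1) j) = 1"
    by (rule prod.neutral) (auto simp: lookup_single when_def)
  finally show ?thesis using True by simp
next
  case False
  have "wt B (Poly_Mapping.single i 1) = 1"
    unfolding wt_def using False by (intro prod.neutral) (auto simp: lookup_single when_def)
  then show ?thesis using False by simp
qed

lemma Ev_lvar_d: "finite B \<Longrightarrow> d \<notin> B \<Longrightarrow> Ev d B (lvar d) = [:0, 1:]"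
  unfolding lvar_def by (simp add: Ev_single wt_single_var monom_Suc)

lemma Ev_lvar: "finite B \<Longrightarrow> i < d \<Longrightarrow> Ev d B (lvar i) = [:(if i \<in> B then -1 else 1):]"
  unfolding lvar_def by (simp add: Ev_single wt_single_var monom_0 lookup_single when_def)

lemma Ev_sig:
  assumes B: "B \<subseteq> {..<d}"
  shows "Ev d B (sig d p) = Ev d B p"
proof -
  let ?\<phi> = "\<lambda>\<alpha> a. monom (a * wt B \<alpha>) (nat (Poly_Mapping.lookup \<alpha> d))"
  have ks: "Poly_Mapping.keys (sig d p) = negz d ` Poly_Mapping.keys p"
  proof
    show "Poly_Mapping.keys (sig d p) \<subseteq> negz d ` Poly_Mapping.keys p"
    proof
      fix \<beta> assume "\<beta> \<in> Poly_Mapping.keys (sig d p)"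
      then have "negz d \<beta> \<in> Poly_Mapping.keys p" by (simp add: in_keys_iff lookup_sig)
      then show "\<beta> \<in> negz d ` Poly_Mapping.keys p" by (intro image_eqI[of _ _ "negz d \<beta>"]) auto
    qed
  next
    show "negz d ` Poly_Mapping.keys p \<subseteq> Poly_Mapping.keys (sig d p)"
      by (auto simp: in_keys_iff lookup_sig)
  qed
  have inj: "inj_on (negz d) (Poly_Mapping.keys p)" by (metis inj_onI negz_negz)
  have "Ev d B (sig d p) = (\<Sum>\<beta>\<in>negz d ` Poly_Mapping.keys p. ?\<phi> \<beta> (Poly_Mapping.lookup (sig d p) \<beta>))"
    unfolding Ev_def lsum_def ks ..
  also have "\<dots> = (\<Sum>\<alpha>\<in>Poly_Mapping.keys p. ?\<phi> (negz d \<alpha>) (Poly_Mapping.lookup p \<alpha>))"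
    by (subst sum.reindex[OF inj]) (simp add: lookup_sig)
  also have "\<dots> = (\<Sum>\<alpha>\<in>Poly_Mapping.keys p. ?\<phi> \<alpha> (Poly_Mapping.lookup p \<alpha>))"
    using B by (intro sum.cong refl) (simp add: wt_negz lookup_negz)
  also have "\<dots> = Ev d B p" unfolding Ev_def lsum_def ..
  finally show ?thesis .
qed

lemma Ev_zdz_sym:
  assumes B: "B \<subseteq> {..<d}" and i: "i < d" and sym: "sig d \<Phi> = \<Phi>"
  shows "Ev d B (zdz i \<Phi>) = 0"
proof -
  have "Ev d B (zdz i \<Phi>) = Ev d B (zdz i (sig d \<Phi>))" using sym by simp
  also have "\<dots> = - Ev d B (sig d (zdz i \<Phi>))" by (simp add: zdz_sig[OF i] Ev_uminus)
  also have "\<dots> = - Ev d B (zdz i \<Phi>)" by (simp add: Ev_sig[OF B])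
  finally have e: "Ev d B (zdz i \<Phi>) = - Ev d B (zdz i \<Phi>)" .
  have "smult (1 + 1) (Ev d B (zdz i \<Phi>)) = Ev d B (zdz i \<Phi>) + Ev d B (zdz i \<Phi>)"
    by (simp only: smult_add_left smult_1_left)
  also have "\<dots> = Ev d B (zdz i \<Phi>) + - Ev d B (zdz i \<Phi>)" by (rule arg_cong[where f = "\<lambda>x. Ev d B (zdz i \<Phi>) + x", OF e])
  also have "\<dots> = 0" by (rule right_minus)
  finally have "smult (1 + 1) (Ev d B (zdz i \<Phi>)) = 0" .
  then show ?thesis by simp
qed


lemma det_on_transpose:
  assumes W: "finite W"
  shows "det_on W (\<lambda>v u. M u v) = det_on W M"
proof -
  let ?P = "{p. p permutes W}"
  have A: "(\<Prod>v\<in>W. M (p v) v) = (\<Prod>w\<in>W. M w (inv p w))" if p: "p permutes W" for p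
  proof -
    have "(\<Prod>v\<in>W. M (p v) (inv p (p v))) = (\<Prod>w\<in>W. M w (inv p w))"
      by (rule prod.reindex_bij_betw[OF permutes_imp_bij[OF p]])
    then show ?thesis using permutes_inverses(2)[OF p] by simp
  qed
  have "det_on W (\<lambda>v u. M u v) = (\<Sum>p\<in>?P. of_int (sign p) * (\<Prod>w\<in>W. M w (inv p w)))"
    unfolding det_on_def by (intro sum.cong refl) (simp add: A)
  also have "\<dots> = (\<Sum>p\<in>?P. of_int (sign (inv p)) * (\<Prod>w\<in>W. M w (inv p w)))"
  proof (intro sum.cong refl)
    fix p assume "p \<in> ?P"
    then have "permutation p" using W permutation_permutes by blast
    then show "of_int (sign p) * (\<Prod>w\<in>W. M w (inv p w)) = of_int (sign (inv p)) * (\<Prod>w\<in>W. M w (inv p w))"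
      by (simp add: sign_inverse)
  qed
  also have "\<dots> = (\<Sum>q\<in>?P. of_int (sign q) * (\<Prod>w\<in>W. M w (q w)))"
  proof (rule sum.reindex_bij_betw)
    show "bij_betw inv ?P ?P"
      by (rule bij_betwI[where g = inv]) (auto simp: permutes_inv permutes_inv_inv)
  qed
  also have "\<dots> = det_on W M" unfolding det_on_def ..
  finally show ?thesis .
qed

lemma charpoly_coeff:
  fixes N :: "'v \<Rightarrow> 'v \<Rightarrow> complex poly"
  assumes W: "finite W" and N: "\<And>v u. degree (N v u) = 0"
  shows "coeff (det_on W (\<lambda>v u. (if v = u then [:0, 1:] else 0) - N v u)) (card W) = 1"
proof -
  let ?A = "\<lambda>v u. (if v = u then [:0, 1:] else 0) - N v u"
  let ?P = "{p. p permutes W}"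
  let ?T = "\<lambda>p. of_int (sign p) * (\<Prod>v\<in>W. ?A v (p v))"
  have finP: "finite ?P" using finite_permutations[OF W] .
  have idP: "id \<in> ?P" by simp
  have det: "det_on W ?A = ?T id + (\<Sum>p\<in>?P - {id}. ?T p)"
    unfolding det_on_def by (rule sum.remove[OF finP idP])
  have Nc: "N v u = [:coeff (N v u) 0:]" for v u using N[of v u] by (metis degree_0_id)
  have diag: "?A v v = [:- coeff (N v v) 0, 1:]" for v by (subst Nc) simp
  have T1: "coeff (?T id) (card W) = 1"
  proof -
    have "?T id = (\<Prod>v\<in>W. ?A v v)" by simp
    also have "\<dots> = (\<Prod>v\<in>W. [:- coeff (N v v) 0, 1:])" by (intro prod.cong refl diag)
    finally have "?T id = (\<Prod>v\<in>W. [:- coeff (N v v) 0, 1:])" .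
    moreover have "degree (\<Prod>v\<in>W. [:- coeff (N v v) 0, 1:]) = card W"
      by (subst degree_prod_eq_sum_degree) auto
    moreover have "lead_coeff (\<Prod>v\<in>W. [:- coeff (N v v) 0, 1:]) = 1"
      by (simp add: lead_coeff_prod)
    ultimately show ?thesis by simp
  qed
  have T2: "coeff (?T p) (card W) = 0" if p: "p \<in> ?P - {id}" for p
  proof -
    have pW: "p permutes W" and pid: "p \<noteq> id" using p by auto
    obtain v0 where v0: "v0 \<in> W" "p v0 \<noteq> v0"
    proof (rule ccontr)
      assume "\<not> thesis"
      then have "\<forall>v\<in>W. p v = v" using that by blast
      moreover have "\<forall>v. v \<notin> W \<longrightarrow> p v = v" using pW by (simp add: permutes_not_in)
      ultimately have "p = id" by (intro ext) (metis id_apply)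
      then show False using pid by simp
    qed
    have dA: "degree (?A v (p v)) \<le> (if p v = v then 1 else 0)" for v
    proof (cases "p v = v")
      case True then show ?thesis using diag[of v] by simp
    next
      case False then show ?thesis using N[of v "p v"] by simp
    qed
    have "degree (\<Prod>v\<in>W. ?A v (p v)) \<le> (\<Sum>v\<in>W. degree (?A v (p v)))"
      using degree_prod_sum_le[OF W, of "\<lambda>v. ?A v (p v)"] by (simp add: o_def)
    also have "\<dots> \<le> (\<Sum>v\<in>W. (if p v = v then 1 else 0))" by (intro sum_mono dA)
    also have "\<dots> < (\<Sum>v\<in>W. (1::nat))"
      using v0 W by (intro sum_strict_mono_ex1) auto
    also have "\<dots> = card W" by simp
    finally have dlt: "degree (\<Prod>v\<in>W. ?A v (p v)) < card W" .
    have "degree (?T p) \<le> degree (\<Prod>v\<in>W. ?A v (p v))"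
      by (simp add: of_int_poly)
    then show ?thesis using dlt by (intro coeff_eq_0) simp
  qed
  have "coeff (\<Sum>p\<in>?P - {id}. ?T p) (card W) = 0"
    by (simp add: coeff_sum T2)
  then show ?thesis using det T1 by simp
qed


lemma lattice_lookup_d: "\<alpha> \<in> lattice d \<Longrightarrow> Poly_Mapping.lookup \<alpha> d = 0"
proof -
  assume "\<alpha> \<in> lattice d"
  then have "d \<notin> Poly_Mapping.keys \<alpha>" by (auto simp: lattice_def)
  then show ?thesis by (simp add: in_keys_iff)
qed

lemma Ev_0 [simp]: "Ev d B 0 = 0"
  unfolding Ev_def by (rule lhom.L_0[OF lhom_Ev])

lemma ring_d_of_int: "(of_int c :: lpoly) \<in> ring_d d"
  using ring_d_lconst[of "of_int c" d] unfolding lconst_def by (simp add: single_of_int)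

lemma ring_d_det_on: "(\<And>v u. M v u \<in> ring_d d) \<Longrightarrow> det_on W M \<in> ring_d d"
  unfolding det_on_def by (intro ring_d_sum ring_d_mult ring_d_of_int ring_d_prod) auto

lemma ring_d_floquet: "floquet d act adj e V v u \<in> ring_d d"
  unfolding floquet_def
  by (intro ring_d_diff ring_d_sum ring_d_single)
     (auto simp: okexp_def lattice_lookup_d, auto simp: lattice_def)

lemma ring_d_dispersion: "dispersion d act adj e V W \<in> ring_d d"
  unfolding dispersion_def
  by (intro ring_d_det_on ring_d_diff ring_d_floquet) (auto intro: ring_d_lvar)

lemma ring_d_crit_gens: "\<Phi> \<in> ring_d d \<Longrightarrow> crit_gens d \<Phi> j \<in> ring_d d"
  unfolding crit_gens_def by (auto intro: ring_d_zdz)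

lemma sig_det_on: "sig d (det_on W M) = det_on W (\<lambda>v u. sig d (M v u))"
  unfolding det_on_def by (simp add: sig_sum sig_mult sig_of_int sig_prod)

lemma Ev_det_on:
  assumes "\<And>v u. M v u \<in> ring_d d"
  shows "Ev d B (det_on W M) = det_on W (\<lambda>v u. Ev d B (M v u))"
proof -
  have "Ev d B (det_on W M) = (\<Sum>p\<in>{p. p permutes W}. Ev d B (of_int (sign p) * (\<Prod>v\<in>W. M v (p v))))"
    unfolding det_on_def by (rule Ev_sum)
  also have "\<dots> = det_on W (\<lambda>v u. Ev d B (M v u))"
    unfolding det_on_def using assms
    by (intro sum.cong refl) (simp add: Ev_mult ring_d_of_int ring_d_prod Ev_of_int Ev_prod)
  finally show ?thesis .
qed

section \<open>Symmetry of the Floquet matrix\<close>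

lemma floquet_sym:
  assumes G: "periodic_graph d act adj" and O: "periodic_operator d act e V"
  shows "sig d (floquet d act adj e V v u) = floquet d act adj e V u v"
proof -
  have adjsym: "adj x y = adj y x" for x y using G unfolding periodic_graph_def by blast
  have act0: "act 0 x = x" for x using G unfolding periodic_graph_def by blast
  have actadd: "act (\<alpha> + \<beta>) x = act \<alpha> (act \<beta> x)" if "\<alpha> \<in> lattice d" "\<beta> \<in> lattice d" for \<alpha> \<beta> x
    using G that unfolding periodic_graph_def by blast
  have adjinv: "adj (act \<alpha> x) (act \<alpha> y) = adj x y" if "\<alpha> \<in> lattice d" for \<alpha> x y
    using G that unfolding periodic_graph_def by blast
  have esym: "e x y = e y x" for x y using O unfolding periodic_operator_def by blast
  have einv: "e (act \<alpha> x) (act \<alpha> y) = e x y" if "\<alpha> \<in> lattice d" for \<alpha> x y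
    using O that unfolding periodic_operator_def by blast
  have latneg: "- \<alpha> \<in> lattice d" if "\<alpha> \<in> lattice d" for \<alpha> using that by (simp add: lattice_def)
  have bk: "act \<alpha> (act (- \<alpha>) x) = x" if "\<alpha> \<in> lattice d" for \<alpha> x
    using actadd[OF that latneg[OF that], of x] act0 by simp
  define A where "A x y = {\<alpha> \<in> lattice d. adj x (act \<alpha> y)}" for x y
  have memA: "- \<alpha> \<in> A u v" if "\<alpha> \<in> A v u" for \<alpha>
  proof -
    have a: "\<alpha> \<in> lattice d" "adj v (act \<alpha> u)" using that by (auto simp: A_def)
    have "adj u (act (- \<alpha>) v) = adj (act \<alpha> u) (act \<alpha> (act (- \<alpha>) v))" using adjinv[OF a(1)] by simp
    also have "\<dots> = adj v (act \<alpha> u)" using bk[OF a(1)] adjsym by simp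
    finally show ?thesis using a latneg by (simp add: A_def)
  qed
  have memA': "- \<beta> \<in> A v u" if "\<beta> \<in> A u v" for \<beta>
  proof -
    have a: "\<beta> \<in> lattice d" "adj u (act \<beta> v)" using that by (auto simp: A_def)
    have "adj v (act (- \<beta>) u) = adj (act \<beta> v) (act \<beta> (act (- \<beta>) u))" using adjinv[OF a(1)] by simp
    also have "\<dots> = adj u (act \<beta> v)" using bk[OF a(1)] adjsym by simp
    finally show ?thesis using a latneg by (simp add: A_def)
  qed
  have evq: "e u (act (- \<alpha>) v) = e v (act \<alpha> u)" if "\<alpha> \<in> lattice d" for \<alpha>
  proof -
    have "e u (act (- \<alpha>) v) = e (act \<alpha> u) (act \<alpha> (act (- \<alpha>) v))" using einv[OF that] by simp
    also have "\<dots> = e v (act \<alpha> u)" using bk[OF that] esym by simp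
    finally show ?thesis .
  qed
  have S: "(\<Sum>\<alpha>\<in>A v u. Poly_Mapping.single (negz d \<alpha>) (complex_of_real (e v (act \<alpha> u))))
      = (\<Sum>\<beta>\<in>A u v. Poly_Mapping.single \<beta> (complex_of_real (e u (act \<beta> v))))"
  proof (rule sum.reindex_bij_witness[where i = uminus and j = uminus])
    fix \<alpha> assume a: "\<alpha> \<in> A v u"
    then have al: "\<alpha> \<in> lattice d" by (simp add: A_def)
    show "- (- \<alpha>) = \<alpha>" by simp
    show "- \<alpha> \<in> A u v" by (rule memA[OF a])
    show "Poly_Mapping.single (- \<alpha>) (complex_of_real (e u (act (- \<alpha>) v))) =
        Poly_Mapping.single (negz d \<alpha>) (complex_of_real (e v (act \<alpha> u)))"
      using al by (simp add: negz_lattice evq)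
  next
    fix \<beta> assume b: "\<beta> \<in> A u v"
    show "- (- \<beta>) = \<beta>" by simp
    show "- \<beta> \<in> A v u" by (rule memA'[OF b])
  qed
  have "sig d (floquet d act adj e V v u) =
      sig d (if v = u then lconst (complex_of_real (V v)) else 0)
      - (\<Sum>\<alpha>\<in>A v u. Poly_Mapping.single (negz d \<alpha>) (complex_of_real (e v (act \<alpha> u))))"
    unfolding floquet_def A_def by (simp add: sig_diff sig_sum sig_single)
  also have "\<dots> = (if u = v then lconst (complex_of_real (V u)) else 0)
      - (\<Sum>\<beta>\<in>A u v. Poly_Mapping.single \<beta> (complex_of_real (e u (act \<beta> v))))"
    using S by (simp add: sig_lconst)
  also have "\<dots> = floquet d act adj e V u v" unfolding floquet_def A_def ..
  finally show ?thesis .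
qed

lemma dispersion_sym:
  assumes G: "periodic_graph d act adj" and O: "periodic_operator d act e V" and W: "finite W"
  shows "sig d (dispersion d act adj e V W) = dispersion d act adj e V W"
proof -
  let ?M = "\<lambda>v u. (if v = u then lvar d else 0) - floquet d act adj e V v u"
  have "sig d (?M v u) = ?M u v" for v u
    by (simp add: sig_diff floquet_sym[OF G O] sig_lvar_d)
  then have "sig d (dispersion d act adj e V W) = det_on W (\<lambda>v u. ?M u v)"
    unfolding dispersion_def sig_det_on by simp
  also have "\<dots> = dispersion d act adj e V W"
    unfolding dispersion_def by (rule det_on_transpose[OF W])
  finally show ?thesis .
qed

lemma degree_Ev_floquet: "degree (Ev d B (floquet d act adj e V v u)) = 0"
proof -
  have deg0: "degree (Ev d B (Poly_Mapping.single \<alpha> c)) = 0" if "\<alpha> \<in> lattice d" for \<alpha> c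
  proof -
    have "Poly_Mapping.lookup \<alpha> d = 0" using that by (rule lattice_lookup_d)
    then show ?thesis by (simp add: Ev_single degree_monom_eq monom_0)
  qed
  have "degree (Ev d B (\<Sum>\<alpha>\<in>{\<alpha> \<in> lattice d. adj v (act \<alpha> u)}.
      Poly_Mapping.single \<alpha> (complex_of_real (e v (act \<alpha> u))))) = 0"
    unfolding Ev_sum
  proof (cases "finite {\<alpha> \<in> lattice d. adj v (act \<alpha> u)}")
    case True
    then show "degree (\<Sum>\<alpha>\<in>{\<alpha> \<in> lattice d. adj v (act \<alpha> u)}.
      Ev d B (Poly_Mapping.single \<alpha> (complex_of_real (e v (act \<alpha> u))))) = 0"
      using deg0 by (intro degree_sum_le[THEN le_zero_eq[THEN iffD1]]) auto
  qed simp
  then show ?thesis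
    unfolding floquet_def Ev_diff
    by (intro degree_diff_le[THEN le_zero_eq[THEN iffD1]]) (auto simp: Ev_lconst)
qed

lemma Ev_dispersion_coeff:
  assumes W: "finite W" and B: "B \<subseteq> {..<d}"
  shows "coeff (Ev d B (dispersion d act adj e V W)) (card W) = 1"
proof -
  have fB: "finite B" using B finite_subset by blast
  have dB: "d \<notin> B" using B by auto
  let ?N = "\<lambda>v u. Ev d B (floquet d act adj e V v u)"
  have Min: "(if v = u then lvar d else 0) - floquet d act adj e V v u \<in> ring_d d" for v u
    by (intro ring_d_diff ring_d_floquet) (simp add: ring_d_lvar)
  have Mev: "Ev d B ((if v = u then lvar d else 0) - floquet d act adj e V v u)
      = (if v = u then [:0, 1:] else 0) - ?N v u" for v u
    by (cases "v = u") (simp_all add: Ev_diff Ev_uminus Ev_lvar_d[OF fB dB])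
  have "Ev d B (dispersion d act adj e V W) = det_on W (\<lambda>v u. (if v = u then [:0, 1:] else 0) - ?N v u)"
    unfolding dispersion_def by (subst Ev_det_on[OF Min]) (simp add: Mev)
  also have "coeff \<dots> (card W) = 1"
    by (rule charpoly_coeff[OF W degree_Ev_floquet])
  finally show ?thesis .
qed


definition sgnc :: "nat set \<Rightarrow> nat \<Rightarrow> complex" where
  "sgnc B i = (if i \<in> B then -1 else 1)"

definition delta :: "nat \<Rightarrow> nat set \<Rightarrow> lpoly" where
  "delta d B = (\<Prod>i<d. lconst (1/2) * (1 + lconst (sgnc B i) * lvar i))"

lemma ring_d_delta: "delta d B \<in> ring_d d"
  unfolding delta_def by (intro ring_d_prod ring_d_mult ring_d_add ring_d_lvar) auto

lemma Ev_delta: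
  assumes B: "B \<subseteq> {..<d}" and B': "B' \<subseteq> {..<d}"
  shows "Ev d B' (delta d B) = (if B = B' then 1 else 0)"
proof -
  have fB': "finite B'" using B' finite_subset by blast
  have fac: "Ev d B' (lconst (1/2) * (1 + lconst (sgnc B i) * lvar i)) = (if (i \<in> B) = (i \<in> B') then 1 else 0)"
    if i: "i < d" for i
  proof -
    have "Ev d B' (lconst (1/2) * (1 + lconst (sgnc B i) * lvar i))
        = [:1/2:] * (1 + [:sgnc B i:] * [:sgnc B' i:])"
      using i fB' by (simp add: Ev_mult Ev_add Ev_lconst Ev_lvar ring_d_lvar ring_d_add ring_d_mult
          sgnc_def Ev_lconst[of d B' 1, simplified] one_pCons)
    also have "\<dots> = (if (i \<in> B) = (i \<in> B') then 1 else 0)"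
      by (auto simp: sgnc_def one_pCons)
    finally show ?thesis .
  qed
  have "Ev d B' (delta d B) = (\<Prod>i<d. Ev d B' (lconst (1/2) * (1 + lconst (sgnc B i) * lvar i)))"
    unfolding delta_def by (intro Ev_prod ring_d_mult ring_d_add ring_d_lvar) auto
  also have "\<dots> = (\<Prod>i<d. (if (i \<in> B) = (i \<in> B') then 1 else 0))"
    by (intro prod.cong refl fac) simp
  also have "\<dots> = (if B = B' then 1 else 0)"
  proof (cases "B = B'")
    case True then show ?thesis by simp
  next
    case False
    then obtain i where "(i \<in> B) \<noteq> (i \<in> B')" by blast
    moreover then have "i < d" using B B' by auto
    ultimately show ?thesis using False by (intro trans[OF prod_zero]) auto
  qed
  finally show ?thesis .
qed

definition fe :: "nat \<Rightarrow> nat set \<Rightarrow> nat \<Rightarrow> lpoly" where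
  "fe d B k = delta d B * Poly_Mapping.single (Poly_Mapping.single d (int k)) 1"

lemma ring_d_fe: "fe d B k \<in> ring_d d"
  unfolding fe_def by (intro ring_d_mult ring_d_delta ring_d_single) (auto simp: okexp_def lookup_single when_def)

lemma Ev_fe:
  assumes B: "B \<subseteq> {..<d}" and B': "B' \<subseteq> {..<d}"
  shows "Ev d B' (fe d B k) = (if B = B' then monom 1 k else 0)"
proof -
  have w: "wt B' (Poly_Mapping.single d (int k)) = 1"
    unfolding wt_def using B' by (intro prod.neutral) (auto simp: lookup_single when_def)
  have "Ev d B' (Poly_Mapping.single (Poly_Mapping.single d (int k)) 1) = monom 1 k"
    by (simp add: Ev_single w)
  then show ?thesis unfolding fe_def
    by (subst Ev_mult) (auto simp: ring_d_delta Ev_delta[OF B B'] intro!: ring_d_single simp: okexp_def lookup_single when_def)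
qed

section \<open>The evaluation map to a finite-dimensional space\<close>

lemma sum_fun_apply': "(\<Sum>v\<in>t. f v) x = (\<Sum>v\<in>t. f v x)"
  by (induction t rule: infinite_finite_induct) auto

interpretation fv: vector_space "\<lambda>(c::complex) (f::nat set \<times> nat \<Rightarrow> complex) x. c * f x"
proof
  fix a b :: complex and x y :: "nat set \<times> nat \<Rightarrow> complex"
  show "(\<lambda>z. a * (x + y) z) = (\<lambda>z. a * x z) + (\<lambda>z. a * y z)" by (simp add: fun_eq_iff distrib_left)
  show "(\<lambda>z. (a + b) * x z) = (\<lambda>z. a * x z) + (\<lambda>z. b * x z)" by (simp add: fun_eq_iff distrib_right)
  show "(\<lambda>z. a * (b * x z)) = (\<lambda>z. (a * b) * x z)" by (simp add: fun_eq_iff)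
  show "(\<lambda>z. 1 * x z) = x" by (simp add: fun_eq_iff)
qed

context
  fixes d :: nat and \<Phi> :: lpoly and n :: nat
  assumes \<Phi>R: "\<Phi> \<in> ring_d d"
    and symz: "\<And>B i. B \<subseteq> {..<d} \<Longrightarrow> i < d \<Longrightarrow> Ev d B (zdz i \<Phi>) = 0"
    and cf: "\<And>B. B \<subseteq> {..<d} \<Longrightarrow> coeff (Ev d B \<Phi>) n = 1"
begin

definition idx :: "(nat set \<times> nat) set" where
  "idx = Pow {..<d} \<times> {..<n}"

definition Tm :: "lpoly \<Rightarrow> nat set \<times> nat \<Rightarrow> complex" where
  "Tm f = (\<lambda>(B, k). if (B, k) \<in> idx then coeff (Ev d B f mod Ev d B \<Phi>) k else 0)"

lemma Tm_add: "Tm (f + g) = Tm f + Tm g"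
  unfolding Tm_def by (auto simp: fun_eq_iff Ev_add poly_mod_add_left)

lemma Tm_0: "Tm 0 = 0"
  unfolding Tm_def by (auto simp: fun_eq_iff)

lemma Tm_sum: "Tm (\<Sum>i\<in>A. F i) = (\<Sum>i\<in>A. Tm (F i))"
  by (induction A rule: infinite_finite_induct) (auto simp: Tm_add Tm_0)

lemma Tm_lconst: "f \<in> ring_d d \<Longrightarrow> Tm (lconst c * f) = (\<lambda>x. c * Tm f x)"
  unfolding Tm_def
  by (auto simp: fun_eq_iff Ev_mult Ev_lconst mod_smult_left)

lemma Tm_gen: "g \<in> ring_d d \<Longrightarrow> j \<le> d \<Longrightarrow> Tm (g * crit_gens d \<Phi> j) = 0"
proof -
  assume g: "g \<in> ring_d d" and j: "j \<le> d"
  have "Ev d B (g * crit_gens d \<Phi> j) mod Ev d B \<Phi> = 0" if B: "B \<subseteq> {..<d}" for B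
  proof (cases "j = 0")
    case True then show ?thesis using g \<Phi>R by (simp add: crit_gens_def Ev_mult)
  next
    case False
    then have "Ev d B (crit_gens d \<Phi> j) = 0" using j symz[OF B, of "j - 1"] by (simp add: crit_gens_def)
    then show ?thesis using g \<Phi>R by (simp add: Ev_mult ring_d_crit_gens)
  qed
  then show ?thesis unfolding Tm_def by (auto simp: fun_eq_iff idx_def)
qed

lemma deg_chi: "B \<subseteq> {..<d} \<Longrightarrow> n \<le> degree (Ev d B \<Phi>)"
  using cf by (intro le_degree) simp

lemma Tm_fe:
  assumes e: "(B, k) \<in> idx"
  shows "Tm (fe d B k) = (\<lambda>x. if x = (B, k) then 1 else 0)"
proof
  fix x show "Tm (fe d B k) x = (if x = (B, k) then 1 else 0)"
  proof (cases x)
    case (Pair B' k')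
    show ?thesis
    proof (cases "(B', k') \<in> idx")
      case False then show ?thesis using e Pair unfolding Tm_def by auto
    next
      case True
      have B: "B \<subseteq> {..<d}" "k < n" using e by (auto simp: idx_def)
      have B': "B' \<subseteq> {..<d}" using True by (auto simp: idx_def)
      have "Ev d B' (fe d B k) mod Ev d B' \<Phi> = (if B = B' then monom 1 k else 0)"
      proof (cases "B = B'")
        case True
        have "degree (monom (1::complex) k) < degree (Ev d B' \<Phi>)"
          using deg_chi[OF B'] B(2) by (simp add: degree_monom_eq)
        moreover have "Ev d B' (fe d B k) = monom 1 k" using Ev_fe[OF B(1) B'] True by simp
        ultimately show ?thesis using True by (simp add: mod_poly_less)
      qed (simp add: Ev_fe[OF B(1) B'])
      then show ?thesis using True Pair unfolding Tm_def by auto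
    qed
  qed
qed

lemma lower_bound:
  assumes sp: "spans d \<Phi> m"
  shows "card idx \<le> m"
proof -
  obtain b where b: "\<forall>k<m. b k \<in> ring_d d"
    and rep: "\<forall>f\<in>ring_d d. \<exists>(c::nat \<Rightarrow> complex) (g::nat \<Rightarrow> lpoly).
              (\<forall>j\<le>d. g j \<in> ring_d d) \<and>
              f = (\<Sum>k<m. lconst (c k) * b k) + (\<Sum>j\<le>d. g j * crit_gens d \<Phi> j)"
    using sp unfolding spans_def by blast
  let ?V = "(\<lambda>k. Tm (b k)) ` {..<m}"
  let ?D = "(\<lambda>e x. if x = e then 1 else 0 :: complex) ` idx"
  have inspan: "(\<lambda>x. if x = e then 1 else 0) \<in> fv.span ?V" if e: "e \<in> idx" for e
  proof -
    obtain B k where ek: "e = (B, k)" by (cases e)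
    obtain c g where g: "\<forall>j\<le>d. g j \<in> ring_d d"
      and f: "fe d B k = (\<Sum>k<m. lconst (c k) * b k) + (\<Sum>j\<le>d. g j * crit_gens d \<Phi> j)"
      using rep ring_d_fe by blast
    have "(\<lambda>x. if x = e then 1 else 0) = Tm (fe d B k)" using Tm_fe e ek by simp
    also have "\<dots> = (\<Sum>k<m. Tm (lconst (c k) * b k)) + (\<Sum>j\<le>d. Tm (g j * crit_gens d \<Phi> j))"
      unfolding f Tm_add Tm_sum ..
    also have "(\<Sum>j\<le>d. Tm (g j * crit_gens d \<Phi> j)) = 0"
      using g by (intro sum.neutral) (simp add: Tm_gen)
    also have "(\<Sum>k<m. Tm (lconst (c k) * b k)) = (\<Sum>k<m. (\<lambda>x. c k * Tm (b k) x))"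
      using b by (intro sum.cong refl) (simp add: Tm_lconst)
    also have "\<dots> + 0 \<in> fv.span ?V"
      by (simp, intro fv.span_sum fv.span_scale fv.span_base) auto
    finally show ?thesis .
  qed
  have indep: "fv.independent ?D"
  proof
    assume "fv.dependent ?D"
    then obtain t u where t: "finite t" "t \<subseteq> ?D" "(\<Sum>v\<in>t. (\<lambda>x. u v * v x)) = 0" "\<exists>v\<in>t. u v \<noteq> 0"
      unfolding fv.dependent_explicit by blast
    then obtain v0 where v0: "v0 \<in> t" "u v0 \<noteq> 0" by blast
    then obtain e0 where e0: "v0 = (\<lambda>x. if x = e0 then 1 else 0)" using t(2) by blast
    have "(\<Sum>v\<in>t. (\<lambda>x. u v * v x)) e0 = 0" using t(3) by simp
    then have "(\<Sum>v\<in>t. u v * v e0) = 0" by (simp add: sum_fun_apply')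
    moreover have "(\<Sum>v\<in>t. u v * v e0) = u v0 * v0 e0"
    proof (rule sum.remove[OF t(1) v0(1), THEN trans])
      have "(\<Sum>v\<in>t - {v0}. u v * v e0) = 0"
      proof (rule sum.neutral, rule ballI)
        fix v assume v: "v \<in> t - {v0}"
        then obtain e where ev: "v = (\<lambda>x. if x = e then 1 else 0)" using t(2) by blast
        then have "e \<noteq> e0" using v e0 by auto
        then show "u v * v e0 = 0" using ev by simp
      qed
      then show "u v0 * v0 e0 + (\<Sum>v\<in>t - {v0}. u v * v e0) = u v0 * v0 e0" by simp
    qed
    ultimately show False using v0(2) e0 by simp
  qed
  have "finite ?V" by simp
  then have "card ?D \<le> card ?V"
    using fv.independent_span_bound[of ?V ?D] indep inspan by blast
  also have "card ?V \<le> m" using card_image_le[of "{..<m}" "\<lambda>k. Tm (b k)"] by simp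
  finally have "card ?D \<le> m" .
  moreover have "card ?D = card idx"
  proof (rule card_image)
    show "inj_on (\<lambda>e x. if x = e then 1 else 0 :: complex) idx"
    proof (rule inj_onI)
      fix e e' assume "(\<lambda>x. if x = e then 1 else 0 :: complex) = (\<lambda>x. if x = e' then 1 else 0)"
      then have "(if e = e then 1 else 0 :: complex) = (if e = e' then 1 else 0)" by metis
      then show "e = e'" by (auto split: if_splits)
    qed
  qed
  ultimately show ?thesis by simp
qed

lemma card_idx: "card idx = 2 ^ d * n"
  unfolding idx_def by (simp add: card_cartesian_product card_Pow)

end


theorem corollary1p8:
  fixes d :: nat
    and act :: "(nat \<Rightarrow>\<^sub>0 int) \<Rightarrow> 'v \<Rightarrow> 'v"
    and adj :: "'v \<Rightarrow> 'v \<Rightarrow> bool"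
    and W :: "'v set"
    and e :: "'v \<Rightarrow> 'v \<Rightarrow> real"
    and V :: "'v \<Rightarrow> real"
  assumes "periodic_graph d act adj"
    and "fundamental_domain d act W"
    and "periodic_operator d act e V"
    and "finite (crit_points d (dispersion d act adj e V W))"
  shows "2 ^ d * card W \<le> crit_degree d (dispersion d act adj e V W)"
proof -
  let ?\<Phi> = "dispersion d act adj e V W"
  have \<Phi>R: "?\<Phi> \<in> ring_d d" by (rule ring_d_dispersion)
  have Gs: "\<forall>j\<le>d. crit_gens d ?\<Phi> j \<in> ring_d d" using \<Phi>R by (auto intro: ring_d_crit_gens)
  obtain n0 where n0: "spans d ?\<Phi> n0" using exists_spans[OF Gs assms(4)] by blast
  have cd: "crit_degree d ?\<Phi> = (LEAST n. spans d ?\<Phi> n)" by (rule crit_degree_eq[OF assms(4)])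
  have sp: "spans d ?\<Phi> (LEAST n. spans d ?\<Phi> n)" using n0 by (rule LeastI)
  show ?thesis
  proof (cases "finite W")
    case False
    then show ?thesis by simp
  next
    case True
    have sym: "sig d ?\<Phi> = ?\<Phi>" by (rule dispersion_sym[OF assms(1) assms(3) True])
    have symz: "Ev d B (zdz i ?\<Phi>) = 0" if "B \<subseteq> {..<d}" "i < d" for B i
      by (rule Ev_zdz_sym[OF that sym])
    have cf: "coeff (Ev d B ?\<Phi>) (card W) = 1" if "B \<subseteq> {..<d}" for B
      by (rule Ev_dispersion_coeff[OF True that])
    have "card (idx d (card W)) \<le> (LEAST n. spans d ?\<Phi> n)"
      by (rule lower_bound[OF \<Phi>R symz cf sp])
    moreover have "card (idx d (card W)) = 2 ^ d * card W"
      by (rule card_idx[OF \<Phi>R symz cf])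
    ultimately show ?thesis using cd by simp
  qed
qed


end
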